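(* With $\mathcal{G}_d$ as in the context, let $M_{\vec b}\in\mathbb{F}[x_{\vec b}]^{r\times r}$ for $\vec b\in\{0,1\}^d$ be matrices whose entries are univariate polynomials in the variable $x_{\vec b}$ of degree $<n$. Then $$\mathrm{span}\Big\{\prod_{\vec b\in\{0,1\}^d}M_{\vec b}(x_{\vec b})\Big\}_{\vec x\in\mathbb{F}^{\{0,1\}^d}}=\mathrm{span}\Big\{\prod_{\vec b\in\{0,1\}^d}M_{\vec b}\big(\mathcal{G}_{d,\vec b}(\vec\alpha)\big)\Big\}_{\vec\alpha\in\mathbb{F}^{d+1}}.$$
   Context: Setup: let $n,r\ge1$, $d\ge0$, $D=2^d$; let $\mathbb{F}$ be a field with $|\mathbb{F}|>(Dnr^3)^2$, let $\omega\in\mathbb{F}$ have multiplicative order $\ge(Dnr^2)^2$, let $\beta_0,\dots,\beta_{r^2-1}\in\mathbb{F}$ be distinct and let $p_0,\dots,p_{r^2-1}\in\mathbb{F}[t]$ be the corresponding Lagrange interpolation polynomials (the unique polynomials of degree $<r^2$ with $p_\ell(\beta_i)=1$ if $i=\ell$ and $0$ otherwise); set also $p_{\ell_{-1}}(t):=t$. Define $\mathcal{G}_d:\mathbb{F}^{d+1}\to\mathbb{F}^{\{0,1\}^d}$ with coordinates indexed by $\vec b=(b_0,\dots,b_{d-1})\in\{0,1\}^d$ by $$\mathcal{G}_{d,\vec b}(\alpha_0,\dots,\alpha_d)=\sum_{\ell_0,\dots,\ell_{d-1}\in\{0,\dots,r^2-1\}}\prod_{i=0}^{d-1}\Big((1-b_i)\,p_{\ell_{i-1}}(\omega^{\ell_i}\alpha_i)+b_i\,p_{\ell_{i-1}}\big((\omega^{\ell_i}\alpha_i)^{2^inr^2}\big)\Big)\cdot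 p_{\ell_{d-1}}(\alpha_d),$$ so $\mathcal{G}_0(\alpha_0)=\alpha_0$. Products $\prod_{\vec b\in\{0,1\}^d}$ of matrices are taken from left to right in increasing order of the integer $\sum_{i=0}^{d-1}b_i2^i$ (so $b_{d-1}$ is the most significant bit). Spans are $\mathbb{F}$-linear spans in $\mathbb{F}^{r\times r}$. *)

theory Defs
  imports "Jordan_Normal_Form.Matrix" "HOL-Computational_Algebra.Polynomial"
begin

text \<open>Bit i of the index b (b encodes the vector (b_0,...,b_{d-1}) in {0,1}^d,
  with b = sum of b_i 2^i), as a field element.\<close>
definition bitv :: "nat \<Rightarrow> nat \<Rightarrow> 'a::field" where
  "bitv b i = of_nat ((b div 2 ^ i) mod 2)"

definition pprev :: "(nat \<Rightarrow> 'a::field poly) \<Rightarrow> (nat \<Rightarrow> nat) \<Rightarrow> nat \<Rightarrow> 'a \<Rightarrow> 'a" where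
  "pprev p l i t = (if i = 0 then t else poly (p (l (i - 1))) t)"

text \<open>The map G_{d,b}(alpha_0,...,alpha_d); alpha is given as a function nat => F
  of which only the values at 0..d are used.\<close>
definition Gcal :: "nat \<Rightarrow> nat \<Rightarrow> nat \<Rightarrow> 'a::field \<Rightarrow> (nat \<Rightarrow> 'a poly) \<Rightarrow> nat \<Rightarrow> (nat \<Rightarrow> 'a) \<Rightarrow> 'a" where
  "Gcal n r d \<omega> p b \<alpha> =
     (\<Sum>l\<in>PiE {..<d} (\<lambda>_. {..<r^2}).
        (\<Prod>i<d. (1 - bitv b i) * pprev p l i (\<omega> ^ l i * \<alpha> i)
                 + bitv b i * pprev p l i ((\<omega> ^ l i * \<alpha> i) ^ (2 ^ i * n * r^2)))
        * pprev p l d (\<alpha> d))"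

definition mat_prod_list :: "nat \<Rightarrow> 'a::field mat list \<Rightarrow> 'a mat" where
  "mat_prod_list r As = foldl (*) (1\<^sub>m r) As"

definition mat_span :: "nat \<Rightarrow> 'a::field mat set \<Rightarrow> 'a mat set" where
  "mat_span r S = {A. A \<in> carrier_mat r r \<and>
     (\<exists>T c. finite T \<and> T \<subseteq> S \<and>
        (\<forall>i<r. \<forall>j<r. A $$ (i, j) = (\<Sum>B\<in>T. c B * B $$ (i, j))))}"

end

theory Submission
  imports Defs "Jordan_Normal_Form.Char_Poly" "HOL-Library.Function_Algebras"
begin

lemma test_det: "det (map_mat (\<lambda>q. poly q a) (A::'a::field poly mat)) = poly (det A) a"
  by (rule comm_ring_hom.hom_det[OF poly_hom.comm_ring_hom_axioms])

lemma mult_entry: "X \<in> carrier_mat r r \<Longrightarrow> Y \<in> carrier_mat r r \<Longrightarrow> i < r \<Longrightarrow> j < r \<Longrightarrow>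
   (X * Y) $$ (i,j) = (\<Sum>l<r. X $$ (i,l) * Y $$ (l,j))"
  by (simp add: scalar_prod_def atLeast0LessThan)

lemma mspan_carrier: "A \<in> mat_span r S \<Longrightarrow> A \<in> carrier_mat r r"
  by (simp add: mat_span_def)

lemma mspan_base: "A \<in> S \<Longrightarrow> A \<in> carrier_mat r r \<Longrightarrow> A \<in> mat_span r S"
  unfolding mat_span_def
  by (rule CollectI, rule conjI, simp, rule exI[of _ "{A}"], rule exI[of _ "\<lambda>_. 1"], simp)

lemma mspan_mono: "S \<subseteq> S' \<Longrightarrow> mat_span r S \<subseteq> mat_span r S'"
  unfolding mat_span_def by blast

lemma mspan_lincomb:
  fixes F :: "'b \<Rightarrow> 'a::field mat"
  assumes I: "finite I" and F: "\<forall>x\<in>I. F x \<in> mat_span r S" and B: "B \<in> carrier_mat r r"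
    and e: "\<forall>i<r. \<forall>j<r. B $$ (i,j) = (\<Sum>x\<in>I. c x * F x $$ (i,j))"
  shows "B \<in> mat_span r S"
proof -
  have "\<forall>x\<in>I. \<exists>Te. finite (fst Te) \<and> fst Te \<subseteq> S \<and>
        (\<forall>i<r. \<forall>j<r. F x $$ (i, j) = (\<Sum>Y\<in>fst Te. snd Te Y * Y $$ (i, j)))"
    using F unfolding mat_span_def by fastforce
  then obtain Te where Te: "\<And>x. x\<in>I \<Longrightarrow> finite (fst (Te x)) \<and> fst (Te x) \<subseteq> S \<and>
        (\<forall>i<r. \<forall>j<r. F x $$ (i, j) = (\<Sum>Y\<in>fst (Te x). snd (Te x) Y * Y $$ (i, j)))"
    by metis
  define T where "T x = fst (Te x)" for x
  define e where "e x = snd (Te x)" for x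
  define U where "U = (\<Union>x\<in>I. T x)"
  have fin: "finite U" using I Te unfolding U_def T_def by auto
  have sub: "U \<subseteq> S" using Te unfolding U_def T_def by auto
  define d where "d Y = (\<Sum>x\<in>I. c x * (if Y \<in> T x then e x Y else 0))" for Y
  have "\<forall>i<r. \<forall>j<r. B $$ (i,j) = (\<Sum>Y\<in>U. d Y * Y $$ (i,j))"
  proof (intro allI impI)
    fix i j assume ij: "i < r" "j < r"
    have "(\<Sum>Y\<in>U. d Y * Y $$ (i,j)) = (\<Sum>Y\<in>U. \<Sum>x\<in>I. c x * ((if Y \<in> T x then e x Y else 0) * Y $$ (i,j)))"
      unfolding d_def sum_distrib_right by (simp add: mult.assoc)
    also have "\<dots> = (\<Sum>x\<in>I. c x * (\<Sum>Y\<in>U. (if Y \<in> T x then e x Y * Y $$ (i,j) else 0)))"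
      by (subst sum.swap, unfold sum_distrib_left, intro sum.cong refl) simp
    also have "\<dots> = (\<Sum>x\<in>I. c x * (\<Sum>Y\<in>T x. e x Y * Y $$ (i,j)))"
    proof (rule sum.cong[OF refl])
      fix x assume x: "x \<in> I"
      have "T x \<subseteq> U" using x unfolding U_def by auto
      hence "(\<Sum>Y\<in>U. (if Y \<in> T x then e x Y * Y $$ (i,j) else 0)) = (\<Sum>Y\<in>U \<inter> T x. e x Y * Y $$ (i,j))"
        using fin by (simp add: sum.inter_restrict)
      also have "U \<inter> T x = T x" using \<open>T x \<subseteq> U\<close> by auto
      finally show "c x * (\<Sum>Y\<in>U. (if Y \<in> T x then e x Y * Y $$ (i,j) else 0)) = c x * (\<Sum>Y\<in>T x. e x Y * Y $$ (i,j))" by simp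
    qed
    also have "\<dots> = (\<Sum>x\<in>I. c x * F x $$ (i,j))"
      using Te ij unfolding T_def e_def by (intro sum.cong) auto
    finally show "B $$ (i,j) = (\<Sum>Y\<in>U. d Y * Y $$ (i,j))" using e ij by simp
  qed
  thus ?thesis unfolding mat_span_def using B fin sub by blast
qed

lemma mspan_trans: assumes "S \<subseteq> mat_span r T" shows "mat_span r S \<subseteq> mat_span r T"
proof
  fix A assume "A \<in> mat_span r S"
  then obtain T' c where "A \<in> carrier_mat r r" "finite T'" "T' \<subseteq> S"
    "\<forall>i<r. \<forall>j<r. A $$ (i, j) = (\<Sum>B\<in>T'. c B * B $$ (i, j))" unfolding mat_span_def by blast
  thus "A \<in> mat_span r T" using assms by (intro mspan_lincomb[of T' id r T A c]) auto
qed

lemma mspan_span: "mat_span r (mat_span r S) = mat_span r S"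
proof
  show "mat_span r (mat_span r S) \<subseteq> mat_span r S" by (rule mspan_trans) simp
  show "mat_span r S \<subseteq> mat_span r (mat_span r S)"
    using mspan_base mspan_carrier by blast
qed

lemma mspan_mult:
  assumes S: "S \<subseteq> carrier_mat r r" and T: "T \<subseteq> carrier_mat r r"
    and A: "A \<in> mat_span r S" and B: "B \<in> mat_span r T"
  shows "A * B \<in> mat_span r {X * Y | X Y. X \<in> S \<and> Y \<in> T}"
proof -
  obtain TA a where TA: "A \<in> carrier_mat r r" "finite TA" "TA \<subseteq> S"
    "\<forall>i<r. \<forall>j<r. A $$ (i, j) = (\<Sum>X\<in>TA. a X * X $$ (i, j))" using A unfolding mat_span_def by blast
  obtain TB b where TB: "B \<in> carrier_mat r r" "finite TB" "TB \<subseteq> T"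
    "\<forall>i<r. \<forall>j<r. B $$ (i, j) = (\<Sum>X\<in>TB. b X * X $$ (i, j))" using B unfolding mat_span_def by blast
  show ?thesis
  proof (rule mspan_lincomb[of "TA \<times> TB" "\<lambda>(X,Y). X * Y" _ _ _ "\<lambda>(X,Y). a X * b Y"])
    show "finite (TA \<times> TB)" using TA TB by auto
    show "\<forall>x\<in>TA \<times> TB. (case x of (X, Y) \<Rightarrow> X * Y) \<in> mat_span r {X * Y |X Y. X \<in> S \<and> Y \<in> T}"
    proof (clarify)
      fix X Y assume XY: "X \<in> TA" "Y \<in> TB"
      hence "X \<in> S" "Y \<in> T" using TA TB by auto
      thus "X * Y \<in> mat_span r {X * Y |X Y. X \<in> S \<and> Y \<in> T}"
        using S T by (intro mspan_base) (blast, blast intro: mult_carrier_mat)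
    qed
    show "A * B \<in> carrier_mat r r" using TA TB by auto
    show "\<forall>i<r. \<forall>j<r. (A * B) $$ (i, j) = (\<Sum>x\<in>TA \<times> TB. (case x of (X, Y) \<Rightarrow> a X * b Y) * (case x of (X, Y) \<Rightarrow> X * Y) $$ (i, j))"
    proof (intro allI impI)
      fix i j assume ij: "i < r" "j < r"
      have "(A * B) $$ (i,j) = (\<Sum>l<r. A $$ (i,l) * B $$ (l,j))" by (rule mult_entry[OF TA(1) TB(1) ij])
      also have "\<dots> = (\<Sum>l<r. (\<Sum>X\<in>TA. a X * X $$ (i, l)) * (\<Sum>Y\<in>TB. b Y * Y $$ (l, j)))"
        using TA(4) TB(4) ij by (intro sum.cong) auto
      also have "\<dots> = (\<Sum>l<r. \<Sum>X\<in>TA. \<Sum>Y\<in>TB. (a X * b Y) * (X $$ (i, l) * Y $$ (l, j)))"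
        by (intro sum.cong refl) (simp add: sum_product mult_ac)
      also have "\<dots> = (\<Sum>X\<in>TA. \<Sum>Y\<in>TB. (a X * b Y) * (\<Sum>l<r. X $$ (i, l) * Y $$ (l, j)))"
        unfolding sum_distrib_left by (subst sum.swap) (rule sum.cong[OF refl], rule sum.swap)
      also have "\<dots> = (\<Sum>X\<in>TA. \<Sum>Y\<in>TB. (a X * b Y) * (X * Y) $$ (i, j))"
        using TA TB S T ij by (intro sum.cong refl, subst mult_entry) auto
      also have "\<dots> = (\<Sum>x\<in>TA \<times> TB. (case x of (X, Y) \<Rightarrow> a X * b Y) * (case x of (X, Y) \<Rightarrow> X * Y) $$ (i, j))"
        unfolding sum.cartesian_product by (intro sum.cong refl) (auto split: prod.splits)
      finally show "(A * B) $$ (i, j) = (\<Sum>x\<in>TA \<times> TB. (case x of (X, Y) \<Rightarrow> a X * b Y) * (case x of (X, Y) \<Rightarrow> X * Y) $$ (i, j))" .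
    qed
  qed
qed

lemma mspan_image_coeffs:
  assumes I: "finite I" and A: "A \<in> mat_span r (f ` I)"
  shows "\<exists>c. \<forall>i<r. \<forall>j<r. A $$ (i,j) = (\<Sum>x\<in>I. c x * f x $$ (i,j))"
proof -
  obtain T c where T: "finite T" "T \<subseteq> f ` I"
    "\<forall>i<r. \<forall>j<r. A $$ (i, j) = (\<Sum>X\<in>T. c X * X $$ (i, j))" using A unfolding mat_span_def by blast
  define g where "g X = (SOME x. x \<in> I \<and> f x = X)" for X
  have g: "X \<in> T \<Longrightarrow> g X \<in> I \<and> f (g X) = X" for X
  proof -
    assume X: "X \<in> T"
    have "\<exists>x. x \<in> I \<and> f x = X" using T(2) X by auto
    thus ?thesis unfolding g_def by (rule someI_ex)
  qed
  have inj: "inj_on g T" by (rule inj_onI) (metis g)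
  define c' where "c' x = (if x \<in> g ` T then c (f x) else 0)" for x
  show ?thesis
  proof (intro exI allI impI)
    fix i j assume ij: "i < r" "j < r"
    have "(\<Sum>x\<in>I. c' x * f x $$ (i,j)) = (\<Sum>x\<in>g ` T. c (f x) * f x $$ (i,j))"
    proof -
      have "g ` T \<subseteq> I" using g by auto
      hence "(\<Sum>x\<in>I. c' x * f x $$ (i,j)) = (\<Sum>x\<in>g ` T. c' x * f x $$ (i,j))"
        using I unfolding c'_def by (intro sum.mono_neutral_right) auto
      thus ?thesis unfolding c'_def by simp
    qed
    also have "\<dots> = (\<Sum>X\<in>T. c X * X $$ (i,j))"
      by (subst sum.reindex[OF inj]) (simp add: g)
    finally show "A $$ (i,j) = (\<Sum>x\<in>I. c' x * f x $$ (i,j))" using T ij by simp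
  qed
qed


definition lag :: "'a::field set \<Rightarrow> 'a \<Rightarrow> 'a poly" where
  "lag X x = smult (inverse (\<Prod>y\<in>X-{x}. (x - y))) (\<Prod>y\<in>X-{x}. [:-y,1:])"


lemma lag_degree: assumes "finite X" "x \<in> X" shows "degree (lag X x) < card X"
proof -
  have "degree (lag X x) \<le> degree (\<Prod>y\<in>X-{x}. [:-y,1:])" unfolding lag_def by (rule degree_smult_le)
  also have "\<dots> \<le> sum (degree \<circ> (\<lambda>y. [:-y,1:])) (X-{x})" by (rule degree_prod_sum_le) (use assms in auto)
  also have "\<dots> = card (X - {x})" by simp
  also have "\<dots> < card X" by (rule card_Diff1_less[OF assms])
  finally show ?thesis .
qed


lemma lag_poly: assumes "finite X" "x \<in> X" "z \<in> X"
  shows "poly (lag X x) z = (if z = x then 1 else 0)"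
proof (cases "z = x")
  case True
  have "(\<Prod>y\<in>X-{x}. (x - y)) \<noteq> 0" using assms by (simp add: prod_zero_iff)
  thus ?thesis using True unfolding lag_def by (simp add: poly_prod)
next
  case False
  hence "(\<Prod>y\<in>X-{x}. poly [:-y,1:] z) = 0" using assms by (simp add: prod_zero_iff)
  thus ?thesis using False unfolding lag_def by (simp add: poly_prod)
qed


lemma interp_poly: assumes X: "finite X" and d: "degree q < card X"
  shows "q = (\<Sum>x\<in>X. smult (poly q x) (lag X x))"
proof (rule poly_eqI_degree[of X])
  fix z assume z: "z \<in> X"
  have "poly (\<Sum>x\<in>X. smult (poly q x) (lag X x)) z = (\<Sum>x\<in>X. poly q x * (if z = x then 1 else 0))"
    by (simp add: poly_sum lag_poly[OF X _ z])
  also have "\<dots> = (\<Sum>x\<in>X. if z = x then poly q x else 0)" by (rule sum.cong) auto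
  also have "\<dots> = poly q z" using X z by (simp add: sum.delta)
  finally show "poly q z = poly (\<Sum>x\<in>X. smult (poly q x) (lag X x)) z" by simp
next
  show "degree q < card X" by fact
next
  have "degree (\<Sum>x\<in>X. smult (poly q x) (lag X x)) \<le> card X - 1"
  proof (rule degree_sum_le[OF X])
    fix x assume "x \<in> X"
    thus "degree (smult (poly q x) (lag X x)) \<le> card X - 1"
      using lag_degree[OF X \<open>x \<in> X\<close>] degree_smult_le[of "poly q x" "lag X x"] by linarith
  qed
  thus "degree (\<Sum>x\<in>X. smult (poly q x) (lag X x)) < card X" using d by linarith
qed


lemma coeff_interp: assumes "finite X" "degree q < card X"
  shows "coeff q k = (\<Sum>x\<in>X. poly q x * coeff (lag X x) k)"
  by (subst interp_poly[OF assms]) (simp add: coeff_sum)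


lemma cmat_in_span:
  assumes A: "A \<in> carrier_mat r r" and X: "finite X"
    and deg: "\<forall>i<r. \<forall>j<r. degree (A $$ (i,j)) < card X"
  shows "map_mat (\<lambda>q. coeff q k) A \<in> mat_span r ((\<lambda>t. map_mat (\<lambda>q. poly q t) A) ` X)"
proof (rule mspan_lincomb[of X "\<lambda>t. map_mat (\<lambda>q. poly q t) A" _ _ _ "\<lambda>x. coeff (lag X x) k"])
  show "finite X" by fact
  show "\<forall>x\<in>X. map_mat (\<lambda>q. poly q x) A \<in> mat_span r ((\<lambda>t. map_mat (\<lambda>q. poly q t) A) ` X)"
    using A by (auto intro!: mspan_base)
  show "map_mat (\<lambda>q. coeff q k) A \<in> carrier_mat r r" using A by simp
  show "\<forall>i<r. \<forall>j<r. map_mat (\<lambda>q. coeff q k) A $$ (i, j) =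
      (\<Sum>x\<in>X. coeff (lag X x) k * map_mat (\<lambda>q. poly q x) A $$ (i, j))"
    using A deg by (auto simp: coeff_interp[OF X] mult.commute)
qed


lemma poly_sum_lt: fixes q :: "'a::field poly" assumes "degree q < N" shows "poly q t = (\<Sum>k<N. coeff q k * t ^ k)"
proof -
  have "poly q t = (\<Sum>k\<le>degree q. coeff q k * t ^ k)" by (rule poly_altdef)
  also have "\<dots> = (\<Sum>k<N. coeff q k * t ^ k)"
    using assms by (intro sum.mono_neutral_left) (auto simp: coeff_eq_0)
  finally show ?thesis .
qed


lemma ev_in_cspan:
  assumes A: "A \<in> carrier_mat r r" and deg: "\<forall>i<r. \<forall>j<r. degree (A $$ (i,j)) < N"
  shows "map_mat (\<lambda>q. poly q t) A \<in> mat_span r ((\<lambda>k. map_mat (\<lambda>q. coeff q k) A) ` {..<N})"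
proof (rule mspan_lincomb[of "{..<N}" "\<lambda>k. map_mat (\<lambda>q. coeff q k) A" _ _ _ "\<lambda>k. t ^ k"])
  show "\<forall>x\<in>{..<N}. map_mat (\<lambda>q. coeff q x) A \<in> mat_span r ((\<lambda>k. map_mat (\<lambda>q. coeff q k) A) ` {..<N})"
    using A by (auto intro!: mspan_base)
  show "\<forall>i<r. \<forall>j<r. map_mat (\<lambda>q. poly q t) A $$ (i, j) = (\<Sum>x<N. t ^ x * map_mat (\<lambda>q. coeff q x) A $$ (i, j))"
  proof (intro allI impI)
    fix i j assume ij: "i < r" "j < r"
    show "map_mat (\<lambda>q. poly q t) A $$ (i, j) = (\<Sum>x<N. t ^ x * map_mat (\<lambda>q. coeff q x) A $$ (i, j))"
    proof -
      have dd: "degree (A $$ (i,j)) < N" using deg ij by auto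
      show ?thesis using A ij by (simp add: poly_sum_lt[OF dd, of t] mult.commute)
    qed
  qed
qed (use A in auto)


lemma exists_points:
  assumes "infinite (UNIV :: 'a set) \<or> N \<le> card (UNIV :: 'a set)"
  shows "\<exists>X :: 'a set. finite X \<and> card X = N"
proof (cases "finite (UNIV :: 'a set)")
  case True
  then obtain T :: "'a set" where "card T = N" "finite T"
    using assms obtain_subset_with_card_n[of N "UNIV :: 'a set"] by auto
  thus ?thesis by blast
next
  case False
  thus ?thesis using infinite_arbitrarily_large[OF False, of N] by blast
qed


lemma cmat_in_range_span:
  assumes A: "A \<in> carrier_mat r r" and pts: "infinite (UNIV :: 'a::field set) \<or> N \<le> card (UNIV :: 'a set)"
    and deg: "\<forall>i<r. \<forall>j<r. degree (A $$ (i,j)) < N"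
  shows "map_mat (\<lambda>q. coeff q k) A \<in> mat_span r (range (\<lambda>t::'a. map_mat (\<lambda>q. poly q t) A))"
proof -
  obtain X :: "'a set" where X: "finite X" "card X = N" using exists_points[OF pts] by blast
  have mem: "map_mat (\<lambda>q. coeff q k) A \<in> mat_span r ((\<lambda>t. map_mat (\<lambda>q. poly q t) A) ` X)"
  proof -
    have "\<forall>i<r. \<forall>j<r. degree (A $$ (i,j)) < card X" using deg X(2) by simp
    thus ?thesis by (rule cmat_in_span[OF A X(1)])
  qed
  have sub: "(\<lambda>t. map_mat (\<lambda>q. poly q t) A) ` X \<subseteq> range (\<lambda>t. map_mat (\<lambda>q. poly q t) A)" by blast
  show ?thesis by (rule subsetD[OF mspan_mono[OF sub] mem])
qed



lemma kron_arith:
  fixes i k k' K :: nat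
  assumes "i < K" "k < K" "i \<le> k + K*k'" "(k + K*k' - i) mod K = 0"
  shows "i = k"
proof (cases "i \<le> k")
  case True
  have "k + K*k' - i = (k - i) + K*k'" using True by simp
  hence "(k + K*k' - i) mod K = (k - i) mod K" by simp
  also have "\<dots> = k - i" using assms(2) by simp
  finally show ?thesis using assms(4) True by simp
next
  case False
  then obtain k'' where k': "k' = Suc k''" using assms(3) assms(1) by (cases k') auto
  have "k + K*k' - i = (K + k - i) + K*k''" using False assms(1) k' by simp
  hence "(k + K*k' - i) mod K = (K + k - i) mod K" by simp
  also have "\<dots> = K + k - i" using False assms(1) by simp
  finally show ?thesis using assms(4) False assms(1) by simp
qed

lemma coeff_kron:
  fixes q h :: "'a::field poly"
  assumes dq: "degree q < K" and k: "k < K"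
  shows "coeff (q * (h \<circ>\<^sub>p monom 1 K)) (k + K*k') = coeff q k * coeff h k'"
proof -
  define n where "n = k + K*k'"
  define f where "f i = coeff q i * coeff (h \<circ>\<^sub>p monom 1 K) (n - i)" for i
  have K0: "K \<noteq> 0" using k by simp
  have z: "f i = 0" if i: "i \<in> {..n} - {k}" for i
  proof (cases "i < K")
    case False
    hence "coeff q i = 0" using dq by (intro coeff_eq_0) simp
    thus ?thesis unfolding f_def by simp
  next
    case True
    have eq: "n - i = K * ((n - i) div K) + (n - i) mod K" by simp
    have lt: "(n - i) mod K < K" using K0 by simp
    have "(n - i) mod K \<noteq> 0" using kron_arith[OF True k, of k'] i unfolding n_def by auto
    hence "coeff (h \<circ>\<^sub>p monom 1 K) (n - i) = 0"
      by (subst eq, subst coeff_pcompose_monom[OF lt]) simp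
    thus ?thesis unfolding f_def by simp
  qed
  have "coeff (q * (h \<circ>\<^sub>p monom 1 K)) n = (\<Sum>i\<le>n. f i)" unfolding f_def by (rule coeff_mult)
  also have "\<dots> = f k + (\<Sum>i\<in>{..n} - {k}. f i)" by (subst sum.remove[of _ k]) (auto simp: n_def)
  also have "(\<Sum>i\<in>{..n} - {k}. f i) = 0" using z by (intro sum.neutral) blast
  also have "f k = coeff q k * coeff h k'"
  proof -
    have "n - k = K * k' + 0" unfolding n_def by simp
    hence "coeff (h \<circ>\<^sub>p monom 1 K) (n - k) = coeff h k'"
      using coeff_pcompose_monom[of 0 K h k'] K0 by simp
    thus ?thesis unfolding f_def by simp
  qed
  finally show ?thesis unfolding n_def by simp
qed

definition kr :: "nat \<Rightarrow> 'a::field poly mat \<Rightarrow> 'a poly mat" where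
  "kr K B = map_mat (\<lambda>q. q \<circ>\<^sub>p monom 1 K) B"

lemma kr_carrier[simp]: "B \<in> carrier_mat r r \<Longrightarrow> kr K B \<in> carrier_mat r r"
  unfolding kr_def by simp

lemma cmat_kron:
  assumes A: "A \<in> carrier_mat r r" and B: "B \<in> carrier_mat r r"
    and dA: "\<forall>i<r. \<forall>j<r. degree (A $$ (i,j)) < K" and k: "k < K"
  shows "map_mat (\<lambda>q. coeff q (k + K*k')) (A * kr K B)
       = map_mat (\<lambda>q. coeff q k) A * map_mat (\<lambda>q. coeff q k') B"
proof (rule eq_matI)
  fix i j assume i: "i < dim_row (map_mat (\<lambda>q. coeff q k) A * map_mat (\<lambda>q. coeff q k') B)"
    and j: "j < dim_col (map_mat (\<lambda>q. coeff q k) A * map_mat (\<lambda>q. coeff q k') B)"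
  have ij: "i < r" "j < r" using i j A B by auto
  have "map_mat (\<lambda>q. coeff q (k + K*k')) (A * kr K B) $$ (i,j) = coeff ((A * kr K B) $$ (i,j)) (k + K*k')"
    using ij A B by (simp add: kr_def)
  also have "\<dots> = coeff (\<Sum>l<r. A $$ (i,l) * (B $$ (l,j) \<circ>\<^sub>p monom 1 K)) (k + K*k')"
    using ij A B by (subst mult_entry[of _ r]) (auto simp: kr_def)
  also have "\<dots> = (\<Sum>l<r. coeff (A $$ (i,l)) k * coeff (B $$ (l,j)) k')"
    unfolding coeff_sum using dA ij by (intro sum.cong refl coeff_kron k) auto
  also have "\<dots> = (map_mat (\<lambda>q. coeff q k) A * map_mat (\<lambda>q. coeff q k') B) $$ (i,j)"
    using ij A B by (subst mult_entry[of _ r]) auto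
  finally show "map_mat (\<lambda>q. coeff q (k + K*k')) (A * kr K B) $$ (i,j) = (map_mat (\<lambda>q. coeff q k) A * map_mat (\<lambda>q. coeff q k') B) $$ (i,j)" .
qed (use A B in \<open>auto simp: kr_def\<close>)

lemma ev_mult:
  assumes A: "A \<in> carrier_mat r r" and B: "B \<in> carrier_mat r r"
  shows "map_mat (\<lambda>q. poly q t) (A * B) = map_mat (\<lambda>q. poly q t) A * map_mat (\<lambda>q. poly q t) (B :: 'a::field poly mat)"
  by (rule semiring_hom.mat_hom_mult[OF poly_hom.semiring_hom_axioms A B])

lemma ev_kr: "map_mat (\<lambda>q. poly q t) (kr K B) = map_mat (\<lambda>q. poly q (t^K)) (B :: 'a::field poly mat)"
  unfolding kr_def by (rule eq_matI) (auto simp: poly_pcompose poly_monom)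

lemma deg_kron:
  assumes A: "A \<in> carrier_mat r r" and B: "B \<in> carrier_mat r r"
    and dA: "\<forall>i<r. \<forall>j<r. degree (A $$ (i,j)) < K" and dB: "\<forall>i<r. \<forall>j<r. degree (B $$ (i,j)) < K"
  shows "\<forall>i<r. \<forall>j<r. degree ((A * kr K (B :: 'a::field poly mat)) $$ (i,j)) < K * K"
proof (intro allI impI)
  fix i j assume ij: "i < r" "j < r"
  have "degree (A $$ (i,j)) < K" using dA ij by blast
  hence K0: "K > 0" by simp
  have "(A * kr K B) $$ (i,j) = (\<Sum>l<r. A $$ (i,l) * (B $$ (l,j) \<circ>\<^sub>p monom 1 K))"
    using ij A B by (subst mult_entry[of _ r]) (auto simp: kr_def)
  also have "degree \<dots> \<le> K * K - 1"
  proof (rule degree_sum_le)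
    fix l assume l: "l \<in> {..<r}"
    have "degree (A $$ (i,l) * (B $$ (l,j) \<circ>\<^sub>p monom 1 K)) \<le> degree (A $$ (i,l)) + degree (B $$ (l,j) \<circ>\<^sub>p monom 1 K)"
      by (rule degree_mult_le)
    also have "degree (B $$ (l,j) \<circ>\<^sub>p monom 1 K) = degree (B $$ (l,j)) * K"
      by (simp add: degree_pcompose degree_monom_eq)
    also have "degree (A $$ (i,l)) + degree (B $$ (l,j)) * K \<le> (K - 1) + (K - 1) * K"
    proof -
      have a1: "degree (A $$ (i,l)) < K" using dA ij l by auto
      have b1: "degree (B $$ (l,j)) < K" using dB ij l by auto
      show ?thesis using a1 b1 by (intro add_mono mult_right_mono) auto
    qed
    also have "(K - 1) + (K - 1) * K = K * K - 1" using K0 by (cases K) (auto simp: algebra_simps)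
    finally show "degree (A $$ (i,l) * (B $$ (l,j) \<circ>\<^sub>p monom 1 K)) \<le> K * K - 1" .
  qed simp
  finally have dd: "degree ((A * kr K B) $$ (i,j)) \<le> K * K - 1" .
  have "0 < K * K" using K0 by simp
  thus "degree ((A * kr K B) $$ (i,j)) < K * K" using dd by linarith
qed

lemma kron_span:
  fixes A B :: "'a::field poly mat"
  assumes A: "A \<in> carrier_mat r r" and B: "B \<in> carrier_mat r r"
    and dA: "\<forall>i<r. \<forall>j<r. degree (A $$ (i,j)) < K" and dB: "\<forall>i<r. \<forall>j<r. degree (B $$ (i,j)) < K"
    and pts: "infinite (UNIV :: 'a set) \<or> K * K \<le> card (UNIV :: 'a set)"
  shows "map_mat (\<lambda>q. poly q s) A * map_mat (\<lambda>q. poly q s') B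
     \<in> mat_span r (range (\<lambda>t. map_mat (\<lambda>q. poly q t) A * map_mat (\<lambda>q. poly q (t^K)) B))"
proof -
  let ?cA = "\<lambda>k. map_mat (\<lambda>q. coeff q k) A"
  let ?cB = "\<lambda>k. map_mat (\<lambda>q. coeff q k) B"
  let ?C = "A * kr K B"
  have C: "?C \<in> carrier_mat r r" using A B by simp
  have a: "map_mat (\<lambda>q. poly q s) A \<in> mat_span r (?cA ` {..<K})" by (rule ev_in_cspan[OF A dA])
  have b: "map_mat (\<lambda>q. poly q s') B \<in> mat_span r (?cB ` {..<K})" by (rule ev_in_cspan[OF B dB])
  have "map_mat (\<lambda>q. poly q s) A * map_mat (\<lambda>q. poly q s') B \<in> mat_span r {X * Y |X Y. X \<in> ?cA ` {..<K} \<and> Y \<in> ?cB ` {..<K}}"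
    by (rule mspan_mult[OF _ _ a b]) (use A B in auto)
  also have "mat_span r {X * Y |X Y. X \<in> ?cA ` {..<K} \<and> Y \<in> ?cB ` {..<K}} \<subseteq> mat_span r (range (\<lambda>t. map_mat (\<lambda>q. poly q t) ?C))"
  proof (rule mspan_trans, clarify)
    fix k k' assume k: "k < K" and k': "k' < K"
    have "?cA k * ?cB k' = map_mat (\<lambda>q. coeff q (k + K*k')) ?C" by (rule cmat_kron[OF A B dA k, symmetric])
    also have "\<dots> \<in> mat_span r (range (\<lambda>t. map_mat (\<lambda>q. poly q t) ?C))"
      by (rule cmat_in_range_span[OF C pts deg_kron[OF A B dA dB]])
    finally show "?cA k * ?cB k' \<in> mat_span r (range (\<lambda>t. map_mat (\<lambda>q. poly q t) ?C))" .
  qed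
  also have "range (\<lambda>t. map_mat (\<lambda>q. poly q t) ?C) = range (\<lambda>t. map_mat (\<lambda>q. poly q t) A * map_mat (\<lambda>q. poly q (t^K)) B)"
    using A B by (simp add: ev_mult ev_kr)
  finally show ?thesis .
qed


lemma sum_fun_apply: "(\<Sum>x\<in>T. f x) y = (\<Sum>x\<in>T. f x y)"
  by (induction T rule: infinite_finite_induct) auto

definition fscale :: "'a::field \<Rightarrow> ('b \<Rightarrow> 'a) \<Rightarrow> ('b \<Rightarrow> 'a)" where
  "fscale c f = (\<lambda>x. c * f x)"

lemma fvs: "vector_space (fscale :: 'a::field \<Rightarrow> ('b \<Rightarrow> 'a) \<Rightarrow> ('b \<Rightarrow> 'a))"
  by unfold_locales (auto simp: fscale_def fun_eq_iff algebra_simps)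

definition emb :: "nat \<Rightarrow> 'a::field mat \<Rightarrow> nat \<times> nat \<Rightarrow> 'a" where
  "emb r A = (\<lambda>(i,j). if i < r \<and> j < r then A $$ (i,j) else 0)"

lemma span_emb:
  assumes A: "A \<in> carrier_mat r r" and S: "S \<subseteq> carrier_mat r r"
    and e: "emb r A \<in> module.span fscale (emb r ` S)"
  shows "A \<in> mat_span r S"
proof -
  interpret vector_space "fscale :: 'a \<Rightarrow> (nat \<times> nat \<Rightarrow> 'a) \<Rightarrow> _" by (rule fvs)
  from e obtain t u where t: "finite t" "t \<subseteq> emb r ` S" and eq': "emb r A = (\<Sum>a\<in>t. fscale (u a) a)"
    unfolding span_explicit mem_Collect_eq by blast
  note eq = eq'[symmetric]
  define F where "F v = (SOME B. B \<in> S \<and> emb r B = v)" for v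
  have F: "v \<in> t \<Longrightarrow> F v \<in> S \<and> emb r (F v) = v" for v
  proof -
    assume "v \<in> t"
    hence "\<exists>B. B \<in> S \<and> emb r B = v" using t by auto
    thus ?thesis unfolding F_def by (rule someI_ex)
  qed
  show ?thesis
  proof (rule mspan_lincomb[of t F r S A u])
    show "\<forall>x\<in>t. F x \<in> mat_span r S"
    proof
      fix x assume x: "x \<in> t"
      hence "F x \<in> S" using F by blast
      thus "F x \<in> mat_span r S" using S by (intro mspan_base) auto
    qed
    show "\<forall>i<r. \<forall>j<r. A $$ (i, j) = (\<Sum>x\<in>t. u x * F x $$ (i, j))"
    proof (intro allI impI)
      fix i j assume ij: "i < r" "j < r"
      have "A $$ (i,j) = emb r A (i,j)" using ij by (simp add: emb_def)
      also have "\<dots> = (\<Sum>a\<in>t. u a * a (i,j))" unfolding eq[symmetric] sum_fun_apply by (simp add: fscale_def)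
      also have "\<dots> = (\<Sum>a\<in>t. u a * F a $$ (i,j))"
      proof (rule sum.cong[OF refl])
        fix a assume a: "a \<in> t"
        hence ea: "emb r (F a) = a" using F by blast
        have "a (i,j) = emb r (F a) (i,j)" using ea by simp
        also have "\<dots> = F a $$ (i,j)" using ij by (simp add: emb_def)
        finally show "u a * a (i,j) = u a * F a $$ (i,j)" by simp
      qed
      finally show "A $$ (i, j) = (\<Sum>x\<in>t. u x * F x $$ (i, j))" .
    qed
  qed (use t A in auto)
qed

lemma emb_in_units_span:
  assumes A: "A \<in> carrier_mat r r"
  shows "emb r A \<in> module.span fscale ((\<lambda>(i,j). (\<lambda>x. if x = (i,j) then 1 else 0)) ` ({..<r} \<times> {..<r}))"
proof -
  interpret vector_space "fscale :: 'a \<Rightarrow> (nat \<times> nat \<Rightarrow> 'a) \<Rightarrow> _" by (rule fvs)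
  let ?U = "(\<lambda>(i,j). (\<lambda>x. if x = (i,j) then (1::'a) else 0)) ` ({..<r} \<times> {..<r})"
  have "emb r A = (\<Sum>ij\<in>{..<r} \<times> {..<r}. fscale (A $$ ij) (\<lambda>x. if x = ij then 1 else 0))"
  proof
    fix x :: "nat \<times> nat"
    obtain a b where x: "x = (a,b)" by (cases x)
    have "(\<Sum>ij\<in>{..<r} \<times> {..<r}. fscale (A $$ ij) (\<lambda>x. if x = ij then 1 else 0)) x
        = (\<Sum>ij\<in>{..<r} \<times> {..<r}. if x = ij then A $$ ij else 0)"
      unfolding sum_fun_apply by (rule sum.cong) (auto simp: fscale_def)
    also have "\<dots> = (if x \<in> {..<r} \<times> {..<r} then A $$ x else 0)" by (simp add: sum.delta)
    also have "\<dots> = emb r A x" unfolding emb_def x by auto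
    finally show "emb r A x = (\<Sum>ij\<in>{..<r} \<times> {..<r}. fscale (A $$ ij) (\<lambda>x. if x = ij then 1 else 0)) x" by simp
  qed
  also have "\<dots> \<in> span ?U"
    by (rule span_sum, rule span_scale, rule span_base) auto
  finally show ?thesis .
qed

definition cf :: "'a::field poly mat \<Rightarrow> nat \<Rightarrow> 'a mat" where
  "cf C k = map_mat (\<lambda>q. coeff q k) C"

definition piv :: "nat \<Rightarrow> 'a::field poly mat \<Rightarrow> nat \<Rightarrow> nat set" where
  "piv r C N = {k. k < N \<and> cf C k \<notin> mat_span r (cf C ` {..<k})}"

lemma cf_carrier[simp]: "C \<in> carrier_mat r r \<Longrightarrow> cf C k \<in> carrier_mat r r"
  by (simp add: cf_def)

lemma piv_span:
  assumes C: "C \<in> carrier_mat r r"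
  shows "k < N \<Longrightarrow> cf C k \<in> mat_span r (cf C ` (piv r C N \<inter> {..k}))"
proof (induction k rule: less_induct)
  case (less k)
  show ?case
  proof (cases "k \<in> piv r C N")
    case True
    thus ?thesis using C by (intro mspan_base) auto
  next
    case False
    hence k: "cf C k \<in> mat_span r (cf C ` {..<k})" using less.prems unfolding piv_def by auto
    have "cf C ` {..<k} \<subseteq> mat_span r (cf C ` (piv r C N \<inter> {..k}))"
    proof
      fix X assume "X \<in> cf C ` {..<k}"
      then obtain k' where k': "k' < k" "X = cf C k'" by auto
      have "X \<in> mat_span r (cf C ` (piv r C N \<inter> {..k'}))" using less.IH[of k'] k' less.prems by auto
      also have "\<dots> \<subseteq> mat_span r (cf C ` (piv r C N \<inter> {..k}))" using k' by (intro mspan_mono) auto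
      finally show "X \<in> mat_span r (cf C ` (piv r C N \<inter> {..k}))" .
    qed
    thus ?thesis using k mspan_trans by blast
  qed
qed

lemma piv_indep:
  assumes C: "C \<in> carrier_mat r r"
  shows "\<not> module.dependent fscale (emb r ` cf C ` (piv r C N \<inter> {..<n})) \<and> inj_on (emb r \<circ> cf C) (piv r C N \<inter> {..<n})"
proof (induction n)
  case 0
  interpret vector_space "fscale :: 'a \<Rightarrow> (nat \<times> nat \<Rightarrow> 'a) \<Rightarrow> _" by (rule fvs)
  show ?case by (simp add: independent_empty)
next
  case (Suc n)
  interpret vector_space "fscale :: 'a \<Rightarrow> (nat \<times> nat \<Rightarrow> 'a) \<Rightarrow> _" by (rule fvs)
  show ?case
  proof (cases "n \<in> piv r C N")
    case False
    hence "piv r C N \<inter> {..<Suc n} = piv r C N \<inter> {..<n}" by (auto simp: less_Suc_eq)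
    thus ?thesis using Suc.IH by simp
  next
    case True
    hence eq: "piv r C N \<inter> {..<Suc n} = insert n (piv r C N \<inter> {..<n})" by (auto simp: less_Suc_eq)
    have nsp: "emb r (cf C n) \<notin> span (emb r ` cf C ` (piv r C N \<inter> {..<n}))"
    proof
      assume "emb r (cf C n) \<in> span (emb r ` cf C ` (piv r C N \<inter> {..<n}))"
      hence "cf C n \<in> mat_span r (cf C ` (piv r C N \<inter> {..<n}))"
        using C by (intro span_emb) auto
      also have "\<dots> \<subseteq> mat_span r (cf C ` {..<n})" by (intro mspan_mono) auto
      finally show False using True unfolding piv_def by auto
    qed
    have nin: "emb r (cf C n) \<notin> emb r ` cf C ` (piv r C N \<inter> {..<n})"
    proof
      assume "emb r (cf C n) \<in> emb r ` cf C ` (piv r C N \<inter> {..<n})"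
      hence "emb r (cf C n) \<in> span (emb r ` cf C ` (piv r C N \<inter> {..<n}))" by (rule span_base)
      thus False using nsp by contradiction
    qed
    have i1: "independent (insert (emb r (cf C n)) (emb r ` cf C ` (piv r C N \<inter> {..<n})))"
      by (rule independent_insertI[OF nsp]) (use Suc.IH in blast)
    have nS: "n \<notin> piv r C N \<inter> {..<n}" by simp
    have i2: "inj_on (emb r \<circ> cf C) (insert n (piv r C N \<inter> {..<n}))"
      using Suc.IH nin nS unfolding image_comp by (simp add: inj_on_insert comp_def)
    show ?thesis unfolding eq image_insert by (intro conjI i1 i2)
  qed
qed

lemma piv_card:
  assumes C: "C \<in> carrier_mat r r"
  shows "card (piv r C N) \<le> r * r" "finite (piv r C N)" "piv r C N \<subseteq> {..<N}"
proof -
  interpret vector_space "fscale :: 'a \<Rightarrow> (nat \<times> nat \<Rightarrow> 'a) \<Rightarrow> _" by (rule fvs)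
  show sub: "piv r C N \<subseteq> {..<N}" unfolding piv_def by auto
  hence eq: "piv r C N \<inter> {..<N} = piv r C N" by auto
  show fin: "finite (piv r C N)" using sub finite_subset by blast
  let ?U = "(\<lambda>(i,j). (\<lambda>x. if x = (i,j) then (1::'a) else 0)) ` ({..<r} \<times> {..<r})"
  have ind: "\<not> dependent (emb r ` cf C ` piv r C N)" and inj: "inj_on (emb r \<circ> cf C) (piv r C N)"
    using piv_indep[OF C, where n=N and N=N] unfolding eq by auto
  have "emb r ` cf C ` piv r C N \<subseteq> span ?U"
  proof
    fix X assume "X \<in> emb r ` cf C ` piv r C N"
    then obtain k where "X = emb r (cf C k)" by blast
    thus "X \<in> span ?U" using emb_in_units_span[OF cf_carrier[OF C, of k]] by simp
  qed
  hence "card (emb r ` cf C ` piv r C N) \<le> card ?U" using independent_span_bound[OF _ ind] by auto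
  also have "card ?U \<le> card ({..<r} \<times> {..<r})" by (rule card_image_le) simp
  also have "\<dots> = r * r" by simp
  finally have "card (emb r ` cf C ` piv r C N) \<le> r * r" .
  moreover have "card (emb r ` cf C ` piv r C N) = card (piv r C N)"
    unfolding image_comp by (rule card_image[OF inj])
  ultimately show "card (piv r C N) \<le> r * r" by simp
qed


lemma vandermonde_det:
  fixes x :: "nat \<Rightarrow> 'a::field"
  assumes inj: "inj_on x {..<m}"
  shows "det (mat m m (\<lambda>(l,j). x j ^ l)) \<noteq> 0"
proof
  let ?V = "mat m m (\<lambda>(l,j). x j ^ l)"
  have V: "?V \<in> carrier_mat m m" by simp
  assume "det ?V = 0"
  hence "det (transpose_mat ?V) = 0" using det_transpose[OF V] by simp
  then obtain v where v: "v \<in> carrier_vec m" "v \<noteq> 0\<^sub>v m" "transpose_mat ?V *\<^sub>v v = 0\<^sub>v m"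
    using det_0_iff_vec_prod_zero_field[of "transpose_mat ?V" m] by auto
  define q where "q = (\<Sum>l<m. monom (v $ l) l)"
  have pq: "poly q (x j) = 0" if j: "j < m" for j
  proof -
    have "0 = (transpose_mat ?V *\<^sub>v v) $ j" using v(3) j by simp
    also have "\<dots> = (\<Sum>l<m. x j ^ l * v $ l)"
      using j v(1) by (simp add: scalar_prod_def atLeast0LessThan)
    also have "\<dots> = poly q (x j)" unfolding q_def poly_sum poly_monom by (simp add: mult.commute)
    finally show ?thesis by simp
  qed
  have m0: "m > 0"
  proof (rule ccontr)
    assume "\<not> m > 0" hence "m = 0" by simp
    hence "v = 0\<^sub>v m" using v(1) by (intro eq_vecI) auto
    thus False using v(2) by simp
  qed
  have dq: "degree q < m"
  proof -
    have "degree q \<le> m - 1" unfolding q_def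
      by (rule degree_sum_le) (auto intro: order.trans[OF degree_monom_le])
    thus ?thesis using m0 by linarith
  qed
  have cardx: "card (x ` {..<m}) = m" using inj by (simp add: card_image)
  have "q = 0"
  proof (rule poly_eqI_degree[of "x ` {..<m}"])
    show "\<And>z. z \<in> x ` {..<m} \<Longrightarrow> poly q z = poly 0 z" using pq by auto
  qed (use dq cardx m0 in auto)
  have "v = 0\<^sub>v m"
  proof (rule eq_vecI)
    fix l assume l: "l < dim_vec (0\<^sub>v m :: 'a vec)"
    hence lm: "l < m" by simp
    have "coeff q l = v $ l" unfolding q_def coeff_sum coeff_monom using lm by (simp add: sum.delta)
    thus "v $ l = 0\<^sub>v m $ l" using \<open>q = 0\<close> lm by simp
  qed (use v(1) in simp)
  thus False using v(2) by simp
qed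

definition ks :: "nat \<Rightarrow> 'a::field poly mat \<Rightarrow> nat \<Rightarrow> nat list" where
  "ks r C N = sorted_list_of_set (piv r C N)"

definition rep :: "nat \<Rightarrow> 'a::field poly mat \<Rightarrow> nat \<Rightarrow> nat \<Rightarrow> nat \<Rightarrow> 'a" where
  "rep r C N k = (SOME c. (\<forall>i<r. \<forall>j<r. cf C k $$ (i,j) = (\<Sum>p\<in>piv r C N \<inter> {..k}. c p * cf C p $$ (i,j)))
      \<and> (k \<in> piv r C N \<longrightarrow> c = (\<lambda>p. if p = k then 1 else 0)))"

definition GG :: "nat \<Rightarrow> 'a::field poly mat \<Rightarrow> nat \<Rightarrow> nat \<Rightarrow> nat \<Rightarrow> 'a" where
  "GG r C N k j = (if ks r C N ! j \<le> k then rep r C N k (ks r C N ! j) else 0)"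

definition Et :: "nat \<Rightarrow> 'a::field poly mat \<Rightarrow> nat \<Rightarrow> 'a \<Rightarrow> 'a poly mat" where
  "Et r C N \<omega> = mat (length (ks r C N)) (length (ks r C N))
     (\<lambda>(l,j). \<Sum>k<N. monom (\<omega>^(l*k) * GG r C N k j) (k - ks r C N ! j))"

context
  fixes r N :: nat and C :: "'a::field poly mat" and \<omega> :: 'a
  assumes C: "C \<in> carrier_mat r r" and deg: "\<forall>i<r. \<forall>j<r. degree (C $$ (i,j)) < N"
    and om: "\<forall>k k'. k < N \<longrightarrow> k' < N \<longrightarrow> \<omega>^k = \<omega>^k' \<longrightarrow> k = k'"
begin

abbreviation "rcP \<equiv> piv r C N"
abbreviation "rck \<equiv> (\<lambda>j. ks r C N ! j)"
abbreviation "rcm \<equiv> length (ks r C N)"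

lemma finP: "finite rcP" using piv_card[OF C] by simp

lemma ks_set: "rcP = rck ` {..<rcm}"
proof -
  have "rcP = set (ks r C N)" unfolding ks_def using finP by simp
  also have "\<dots> = rck ` {..<rcm}" by (auto simp: set_conv_nth)
  finally show ?thesis .
qed

lemma ks_inj: "inj_on rck {..<rcm}"
  by (rule inj_onI) (simp add: ks_def nth_eq_iff_index_eq)

lemma ks_piv: "j < rcm \<Longrightarrow> rck j \<in> rcP" using ks_set by auto

lemma ks_lt: "j < rcm \<Longrightarrow> rck j < N" using ks_piv piv_card(3)[OF C] by auto

lemma m_card: "rcm = card rcP" unfolding ks_def by simp

lemma rep_ok:
  assumes k: "k < N"
  shows "(\<forall>i<r. \<forall>j<r. cf C k $$ (i,j) = (\<Sum>p\<in>rcP \<inter> {..k}. rep r C N k p * cf C p $$ (i,j)))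
      \<and> (k \<in> rcP \<longrightarrow> rep r C N k = (\<lambda>p. if p = k then 1 else 0))"
proof -
  have "\<exists>c. (\<forall>i<r. \<forall>j<r. cf C k $$ (i,j) = (\<Sum>p\<in>rcP \<inter> {..k}. c p * cf C p $$ (i,j)))
      \<and> (k \<in> rcP \<longrightarrow> c = (\<lambda>p. if p = k then 1 else 0))"
  proof (cases "k \<in> rcP")
    case True
    have h: "\<forall>i<r. \<forall>j<r. cf C k $$ (i,j) = (\<Sum>p\<in>rcP \<inter> {..k}. (if p = k then 1 else 0) * cf C p $$ (i,j))"
    proof (intro allI impI)
      fix i j
      have "(\<Sum>p\<in>rcP \<inter> {..k}. (if p = k then 1 else 0) * cf C p $$ (i,j)) = (\<Sum>p\<in>rcP \<inter> {..k}. if p = k then cf C p $$ (i,j) else 0)"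
        by (rule sum.cong) auto
      also have "\<dots> = cf C k $$ (i,j)" using True finP by (simp add: sum.delta')
      finally show "cf C k $$ (i,j) = (\<Sum>p\<in>rcP \<inter> {..k}. (if p = k then 1 else 0) * cf C p $$ (i,j))" by simp
    qed
    show ?thesis
    proof (rule exI[where x="\<lambda>p. if p = k then 1 else 0"], rule conjI)
      show "\<forall>i<r. \<forall>j<r. cf C k $$ (i,j) = (\<Sum>p\<in>rcP \<inter> {..k}. (if p = k then 1 else 0) * cf C p $$ (i,j))" by (rule h)
    qed simp
  next
    case False
    have "cf C k \<in> mat_span r (cf C ` (rcP \<inter> {..k}))" by (rule piv_span[OF C k])
    from mspan_image_coeffs[OF _ this] finP show ?thesis using False by auto
  qed
  thus ?thesis unfolding rep_def by (rule someI_ex)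
qed

lemma cf_rep:
  assumes k: "k < N" and ij: "i < r" "j < r"
  shows "cf C k $$ (i,j) = (\<Sum>j'<rcm. GG r C N k j' * cf C (rck j') $$ (i,j))"
proof -
  have "cf C k $$ (i,j) = (\<Sum>p\<in>rcP \<inter> {..k}. rep r C N k p * cf C p $$ (i,j))" using rep_ok[OF k] ij by blast
  also have "\<dots> = (\<Sum>p\<in>rcP. if p \<in> {..k} then rep r C N k p * cf C p $$ (i,j) else 0)"
    by (rule sum.inter_restrict[OF finP])
  also have "\<dots> = (\<Sum>j'<rcm. if rck j' \<in> {..k} then rep r C N k (rck j') * cf C (rck j') $$ (i,j) else 0)"
    by (subst ks_set, subst sum.reindex[OF ks_inj]) simp
  also have "\<dots> = (\<Sum>j'<rcm. GG r C N k j' * cf C (rck j') $$ (i,j))"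
    unfolding GG_def by (rule sum.cong) auto
  finally show ?thesis .
qed

lemma GG_diag: "j < rcm \<Longrightarrow> GG r C N (rck j) j = 1"
  unfolding GG_def using rep_ok[OF ks_lt] ks_piv by auto

lemma Et_carrier: "Et r C N \<omega> \<in> carrier_mat rcm rcm" unfolding Et_def by simp

lemma poly_Et:
  assumes l: "l < rcm" and j: "j < rcm"
  shows "poly (Et r C N \<omega> $$ (l,j)) a * a ^ rck j = (\<Sum>k<N. \<omega>^(l*k) * GG r C N k j * a^k)"
proof -
  have "poly (Et r C N \<omega> $$ (l,j)) a * a ^ rck j = (\<Sum>k<N. \<omega>^(l*k) * GG r C N k j * (a ^ (k - rck j) * a ^ rck j))"
    unfolding Et_def using l j by (simp add: poly_sum poly_monom sum_distrib_right mult.assoc)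
  also have "\<dots> = (\<Sum>k<N. \<omega>^(l*k) * GG r C N k j * a^k)"
  proof (rule sum.cong[OF refl])
    fix k
    show "\<omega>^(l*k) * GG r C N k j * (a ^ (k - rck j) * a ^ rck j) = \<omega>^(l*k) * GG r C N k j * a^k"
    proof (cases "rck j \<le> k")
      case True
      hence "a ^ (k - rck j) * a ^ rck j = a ^ k" by (simp add: power_add[symmetric])
      thus ?thesis by simp
    next
      case False
      thus ?thesis unfolding GG_def by simp
    qed
  qed
  finally show ?thesis .
qed

lemma Et0: "map_mat (\<lambda>q. poly q 0) (Et r C N \<omega>) = mat rcm rcm (\<lambda>(l,j). (\<omega> ^ rck j) ^ l)"
proof (rule eq_matI)
  fix l j assume l: "l < dim_row (mat rcm rcm (\<lambda>(l,j). (\<omega> ^ rck j) ^ l))" and j: "j < dim_col (mat rcm rcm (\<lambda>(l,j). (\<omega> ^ rck j) ^ l))"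
  hence lj: "l < rcm" "j < rcm" by auto
  have "map_mat (\<lambda>q. poly q 0) (Et r C N \<omega>) $$ (l,j) = (\<Sum>k<N. \<omega>^(l*k) * GG r C N k j * 0 ^ (k - rck j))"
    unfolding Et_def using lj by (simp add: poly_sum poly_monom)
  also have "\<dots> = (\<Sum>k<N. if k = rck j then \<omega>^(l*k) * GG r C N k j else 0)"
  proof (rule sum.cong[OF refl])
    fix k
    show "\<omega>^(l*k) * GG r C N k j * 0 ^ (k - rck j) = (if k = rck j then \<omega>^(l*k) * GG r C N k j else 0)"
      by (cases "k < rck j") (auto simp: GG_def)
  qed
  also have "\<dots> = \<omega>^(l * rck j) * GG r C N (rck j) j" using ks_lt[OF lj(2)] by (simp add: sum.delta')
  also have "\<dots> = (\<omega> ^ rck j) ^ l" using GG_diag[OF lj(2)] by (simp add: power_mult[symmetric] mult.commute)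
  finally show "map_mat (\<lambda>q. poly q 0) (Et r C N \<omega>) $$ (l,j) = mat rcm rcm (\<lambda>(l,j). (\<omega> ^ rck j) ^ l) $$ (l,j)"
    using lj by simp
qed (auto simp: Et_def)

lemma det_Et_nz: "det (Et r C N \<omega>) \<noteq> 0"
proof
  assume "det (Et r C N \<omega>) = 0"
  hence "poly (det (Et r C N \<omega>)) 0 = 0" by simp
  hence "det (map_mat (\<lambda>q. poly q 0) (Et r C N \<omega>)) = 0"
    by (simp add: comm_ring_hom.hom_det[OF poly_hom.comm_ring_hom_axioms])
  hence "det (mat rcm rcm (\<lambda>(l,j). (\<omega> ^ rck j) ^ l)) = 0" unfolding Et0 .
  moreover have "inj_on (\<lambda>j. \<omega> ^ rck j) {..<rcm}"
  proof (rule inj_onI)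
    fix j j' assume "j \<in> {..<rcm}" "j' \<in> {..<rcm}" "\<omega> ^ rck j = \<omega> ^ rck j'"
    hence "rck j = rck j'" using om ks_lt by auto
    thus "j = j'" using ks_inj \<open>j \<in> {..<rcm}\<close> \<open>j' \<in> {..<rcm}\<close> by (auto dest: inj_onD)
  qed
  ultimately show False using vandermonde_det by blast
qed

lemma ev_point:
  assumes l: "l < rcm" and ij: "i < r" "j < r"
  shows "map_mat (\<lambda>q. poly q (\<omega>^l * a)) C $$ (i,j)
     = (\<Sum>j'<rcm. (poly (Et r C N \<omega> $$ (l,j')) a * a ^ rck j') * cf C (rck j') $$ (i,j))"
proof -
  have "map_mat (\<lambda>q. poly q (\<omega>^l * a)) C $$ (i,j) = (\<Sum>k<N. coeff (C $$ (i,j)) k * (\<omega>^l * a)^k)"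
    using C ij deg by (simp add: poly_sum_lt)
  also have "\<dots> = (\<Sum>k<N. (\<omega>^l * a)^k * (\<Sum>j'<rcm. GG r C N k j' * cf C (rck j') $$ (i,j)))"
  proof (rule sum.cong[OF refl])
    fix k assume "k \<in> {..<N}"
    hence "cf C k $$ (i,j) = (\<Sum>j'<rcm. GG r C N k j' * cf C (rck j') $$ (i,j))" using cf_rep ij by auto
    moreover have "cf C k $$ (i,j) = coeff (C $$ (i,j)) k" using C ij by (simp add: cf_def)
    ultimately show "coeff (C $$ (i,j)) k * (\<omega>^l * a)^k = (\<omega>^l * a)^k * (\<Sum>j'<rcm. GG r C N k j' * cf C (rck j') $$ (i,j))"
      by (simp add: mult.commute)
  qed
  also have "\<dots> = (\<Sum>j'<rcm. (\<Sum>k<N. \<omega>^(l*k) * GG r C N k j' * a^k) * cf C (rck j') $$ (i,j))"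
  proof -
    have "(\<Sum>k<N. (\<omega>^l * a)^k * (\<Sum>j'<rcm. GG r C N k j' * cf C (rck j') $$ (i,j)))
        = (\<Sum>k<N. \<Sum>j'<rcm. (\<omega>^l * a)^k * (GG r C N k j' * cf C (rck j') $$ (i,j)))"
      by (simp add: sum_distrib_left)
    also have "\<dots> = (\<Sum>j'<rcm. \<Sum>k<N. (\<omega>^l * a)^k * (GG r C N k j' * cf C (rck j') $$ (i,j)))"
      by (rule sum.swap)
    also have "\<dots> = (\<Sum>j'<rcm. (\<Sum>k<N. \<omega>^(l*k) * GG r C N k j' * a^k) * cf C (rck j') $$ (i,j))"
      unfolding sum_distrib_right by (intro sum.cong refl) (simp add: power_mult_distrib power_mult[symmetric] mult_ac)
    finally show ?thesis .
  qed
  also have "\<dots> = (\<Sum>j'<rcm. (poly (Et r C N \<omega> $$ (l,j')) a * a ^ rck j') * cf C (rck j') $$ (i,j))"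
    using poly_Et[OF l] by simp
  finally show ?thesis .
qed

lemma good_point:
  assumes a0: "a \<noteq> 0" and da: "poly (det (Et r C N \<omega>)) a \<noteq> 0" and mR: "rcm \<le> R"
  shows "map_mat (\<lambda>q. poly q t) C \<in> mat_span r ((\<lambda>l. map_mat (\<lambda>q. poly q (\<omega>^l * a)) C) ` {..<R})"
proof -
  let ?S = "(\<lambda>l. map_mat (\<lambda>q. poly q (\<omega>^l * a)) C) ` {..<R}"
  let ?Ea = "map_mat (\<lambda>q. poly q a) (Et r C N \<omega>)"
  have Ea: "?Ea \<in> carrier_mat rcm rcm" using Et_carrier by simp
  have "det ?Ea \<noteq> 0" using da by (simp add: comm_ring_hom.hom_det[OF poly_hom.comm_ring_hom_axioms])
  from det_non_zero_imp_unit[OF Ea this, of "()"]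
  obtain Psi where Psi: "Psi \<in> carrier_mat rcm rcm" "Psi * ?Ea = 1\<^sub>m rcm"
    unfolding Units_def ring_mat_def by auto
  have step1: "cf C (rck j) \<in> mat_span r ?S" if j: "j < rcm" for j
  proof (rule mspan_lincomb[of "{..<rcm}" "\<lambda>l. map_mat (\<lambda>q. poly q (\<omega>^l * a)) C" _ _ _ "\<lambda>l. Psi $$ (j,l) / a ^ rck j"])
    show "\<forall>x\<in>{..<rcm}. map_mat (\<lambda>q. poly q (\<omega> ^ x * a)) C \<in> mat_span r ?S"
      using mR C by (auto intro!: mspan_base)
    show "\<forall>i<r. \<forall>i'<r. cf C (rck j) $$ (i, i') = (\<Sum>x<rcm. Psi $$ (j, x) / a ^ rck j * map_mat (\<lambda>q. poly q (\<omega> ^ x * a)) C $$ (i, i'))"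
    proof (intro allI impI)
      fix i i' assume ii: "i < r" "i' < r"
      have "(\<Sum>x<rcm. Psi $$ (j, x) * map_mat (\<lambda>q. poly q (\<omega> ^ x * a)) C $$ (i, i'))
          = (\<Sum>x<rcm. Psi $$ (j, x) * (\<Sum>j'<rcm. (?Ea $$ (x,j') * a ^ rck j') * cf C (rck j') $$ (i,i')))"
        using ev_point ii Et_carrier by (intro sum.cong refl) auto
      also have "\<dots> = (\<Sum>j'<rcm. (\<Sum>x<rcm. Psi $$ (j, x) * ?Ea $$ (x,j')) * (a ^ rck j' * cf C (rck j') $$ (i,i')))"
      proof -
        have "(\<Sum>x<rcm. Psi $$ (j, x) * (\<Sum>j'<rcm. (?Ea $$ (x,j') * a ^ rck j') * cf C (rck j') $$ (i,i')))
            = (\<Sum>x<rcm. \<Sum>j'<rcm. Psi $$ (j, x) * ((?Ea $$ (x,j') * a ^ rck j') * cf C (rck j') $$ (i,i')))"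
          by (simp add: sum_distrib_left)
        also have "\<dots> = (\<Sum>j'<rcm. \<Sum>x<rcm. Psi $$ (j, x) * ((?Ea $$ (x,j') * a ^ rck j') * cf C (rck j') $$ (i,i')))"
          by (rule sum.swap)
        also have "\<dots> = (\<Sum>j'<rcm. (\<Sum>x<rcm. Psi $$ (j, x) * ?Ea $$ (x,j')) * (a ^ rck j' * cf C (rck j') $$ (i,i')))"
          unfolding sum_distrib_right by (intro sum.cong refl) (simp add: mult.assoc)
        finally show ?thesis .
      qed
      also have "\<dots> = (\<Sum>j'<rcm. (1\<^sub>m rcm) $$ (j,j') * (a ^ rck j' * cf C (rck j') $$ (i,i')))"
      proof (rule sum.cong[OF refl])
        fix j' assume "j' \<in> {..<rcm}"
        hence "(Psi * ?Ea) $$ (j,j') = (\<Sum>x<rcm. Psi $$ (j, x) * ?Ea $$ (x,j'))"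
          using Psi Ea j by (intro mult_entry) auto
        thus "(\<Sum>x<rcm. Psi $$ (j, x) * ?Ea $$ (x,j')) * (a ^ rck j' * cf C (rck j') $$ (i,i')) = (1\<^sub>m rcm) $$ (j,j') * (a ^ rck j' * cf C (rck j') $$ (i,i'))"
          using Psi(2) by simp
      qed
      also have "\<dots> = a ^ rck j * cf C (rck j) $$ (i,i')"
        using j by (simp add: sum.delta if_distrib[of "\<lambda>v. v * _"] cong: if_cong)
      finally have "(\<Sum>x<rcm. Psi $$ (j, x) * map_mat (\<lambda>q. poly q (\<omega> ^ x * a)) C $$ (i, i')) = a ^ rck j * cf C (rck j) $$ (i,i')" .
      hence "(\<Sum>x<rcm. Psi $$ (j, x) * map_mat (\<lambda>q. poly q (\<omega> ^ x * a)) C $$ (i, i')) / a ^ rck j = cf C (rck j) $$ (i,i')"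
        using a0 by simp
      thus "cf C (rck j) $$ (i, i') = (\<Sum>x<rcm. Psi $$ (j, x) / a ^ rck j * map_mat (\<lambda>q. poly q (\<omega> ^ x * a)) C $$ (i, i'))"
        by (simp add: sum_divide_distrib)
    qed
  qed (use C in auto)
  have step2: "cf C k \<in> mat_span r ?S" if k: "k < N" for k
  proof (rule mspan_lincomb[of "{..<rcm}" "\<lambda>j. cf C (rck j)" _ _ _ "\<lambda>j. GG r C N k j"])
    show "\<forall>i<r. \<forall>j<r. cf C k $$ (i, j) = (\<Sum>x<rcm. GG r C N k x * cf C (rck x) $$ (i, j))"
      using cf_rep[OF k] by blast
  qed (use step1 C in auto)
  have "map_mat (\<lambda>q. poly q t) C \<in> mat_span r ((\<lambda>k. map_mat (\<lambda>q. coeff q k) C) ` {..<N})"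
    by (rule ev_in_cspan[OF C deg])
  also have "\<dots> \<subseteq> mat_span r ?S"
    by (rule mspan_trans) (use step2 in \<open>auto simp: cf_def\<close>)
  finally show ?thesis .
qed

lemma rank_condenser:
  assumes R: "r * r \<le> R"
  shows "\<exists>Bad. finite Bad \<and> card Bad \<le> 1 + R * N \<and>
     (\<forall>a. a \<notin> Bad \<longrightarrow> (\<forall>t. map_mat (\<lambda>q. poly q t) C \<in> mat_span r ((\<lambda>l. map_mat (\<lambda>q. poly q (\<omega>^l * a)) C) ` {..<R})))"
proof -
  let ?D = "det (Et r C N \<omega>)"
  have mR: "rcm \<le> R" using m_card piv_card(1)[OF C, where N=N] R by simp
  have D0: "?D \<noteq> 0" by (rule det_Et_nz)
  have degD: "degree ?D \<le> (N - 1) * rcm"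
  proof (rule degree_det_le[OF _ Et_carrier])
    fix l j assume "l < rcm" "j < rcm"
    thus "degree (Et r C N \<omega> $$ (l,j)) \<le> N - 1"
      unfolding Et_def by (auto intro!: degree_sum_le order.trans[OF degree_monom_le])
  qed
  define Bad where "Bad = insert 0 {a. poly ?D a = 0}"
  have fin: "finite Bad" unfolding Bad_def using poly_roots_finite[OF D0] by simp
  have "card Bad \<le> Suc (card {a. poly ?D a = 0})" unfolding Bad_def using poly_roots_finite[OF D0] by (simp add: card_insert_if)
  also have "card {a. poly ?D a = 0} \<le> degree ?D" by (rule card_poly_roots_bound[OF D0])
  also have "\<dots> \<le> (N - 1) * rcm" by (rule degD)
  also have "\<dots> \<le> N * R" using mR by (intro mult_mono) auto
  finally have cB: "card Bad \<le> 1 + R * N" by (simp add: mult.commute)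
  show ?thesis
  proof (intro exI conjI allI impI)
    fix a t assume "a \<notin> Bad"
    hence "a \<noteq> 0" "poly ?D a \<noteq> 0" unfolding Bad_def by auto
    thus "map_mat (\<lambda>q. poly q t) C \<in> mat_span r ((\<lambda>l. map_mat (\<lambda>q. poly q (\<omega>^l * a)) C) ` {..<R})"
      using good_point mR by blast
  qed (use fin cB in auto)
qed

end


definition phi :: "nat \<Rightarrow> nat \<Rightarrow> nat \<Rightarrow> nat \<Rightarrow> 'a::field \<Rightarrow> 'a" where
  "phi n r i b u = (if odd (b div 2^i) then u ^ (2^i * n * r^2) else u)"

fun gp :: "nat \<Rightarrow> nat \<Rightarrow> 'a::field \<Rightarrow> (nat \<Rightarrow> 'a poly) \<Rightarrow> nat \<Rightarrow> nat \<Rightarrow> (nat \<Rightarrow> 'a) \<Rightarrow> 'a poly" where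
  "gp n r \<omega> p 0 b \<alpha> = [:0, 1:]"
| "gp n r \<omega> p (Suc i) b \<alpha> = (\<Sum>l<r^2. smult (poly (gp n r \<omega> p i b \<alpha>) (phi n r i b (\<omega>^l * \<alpha> i))) (p l))"

lemma gp_indep: "(\<forall>j<i. \<alpha> j = \<alpha>' j) \<Longrightarrow> gp n r \<omega> p i b \<alpha> = gp n r \<omega> p i b \<alpha>'"
  by (induction i) auto

lemma gp_degree:
  assumes r: "r \<ge> 1" and hp: "\<forall>l<r^2. degree (p l) < r^2"
  shows "degree (gp n r \<omega> p i b \<alpha>) \<le> r^2"
proof (cases i)
  case 0
  have "1 \<le> r^2" using r by simp
  thus ?thesis using 0 by simp
next
  case (Suc j)
  have "degree (gp n r \<omega> p (Suc j) b \<alpha>) \<le> r^2"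
    unfolding gp.simps
    by (rule degree_sum_le) (use hp in \<open>auto intro: order.trans[OF degree_smult_le] less_imp_le\<close>)
  thus ?thesis using Suc by simp
qed

lemma gp_beta:
  assumes hp: "\<forall>l<r^2. \<forall>i<r^2. poly (p l) (\<beta> i) = (if i = l then 1 else 0)" and m: "m < r^2"
  shows "poly (gp n r \<omega> p (Suc i) b \<alpha>) (\<beta> m) = poly (gp n r \<omega> p i b \<alpha>) (phi n r i b (\<omega>^m * \<alpha> i))"
proof -
  have "poly (gp n r \<omega> p (Suc i) b \<alpha>) (\<beta> m)
      = (\<Sum>l<r^2. poly (gp n r \<omega> p i b \<alpha>) (phi n r i b (\<omega>^l * \<alpha> i)) * (if m = l then 1 else 0))"
    using hp m by (simp add: poly_sum)
  also have "\<dots> = (\<Sum>l<r^2. if m = l then poly (gp n r \<omega> p i b \<alpha>) (phi n r i b (\<omega>^l * \<alpha> i)) else 0)"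
    by (rule sum.cong) auto
  also have "\<dots> = poly (gp n r \<omega> p i b \<alpha>) (phi n r i b (\<omega>^m * \<alpha> i))" using m by (simp add: sum.delta)
  finally show ?thesis .
qed

lemma bitv_factor:
  "(1 - bitv b j) * pprev p l j X + bitv b j * pprev p l j (X ^ (2^j * n * r^2))
   = pprev p l j (phi n r j b (X :: 'a::field))"
proof (cases "odd (b div 2^j)")
  case True
  hence "(b div 2^j) mod 2 = 1" by presburger
  thus ?thesis using True by (simp add: bitv_def phi_def)
next
  case False
  hence "(b div 2^j) mod 2 = 0" by presburger
  thus ?thesis using False by (simp add: bitv_def phi_def)
qed

lemma sum_PiE_insert:
  assumes "x \<notin> S"
  shows "(\<Sum>l\<in>PiE (insert x S) T. f l) = (\<Sum>y\<in>T x. \<Sum>g\<in>PiE S T. f (g(x := y)))"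
proof -
  have inj: "inj_on (\<lambda>(y, g). g(x := y)) (T x \<times> PiE S T)"
  proof (rule inj_onI, clarify)
    fix y g y' g' assume g: "g \<in> PiE S T" and g': "g' \<in> PiE S T" and eq: "g(x := y) = g'(x := y')"
    have "y = y'" using fun_cong[OF eq, of x] by simp
    moreover have "g = g'"
    proof
      fix z show "g z = g' z"
      proof (cases "z = x")
        case True
        have "g x = undefined" by (rule PiE_arb[OF g assms])
        moreover have "g' x = undefined" by (rule PiE_arb[OF g' assms])
        ultimately show ?thesis using True by simp
      next
        case False
        thus ?thesis using fun_cong[OF eq, of z] by simp
      qed
    qed
    ultimately show "y = y' \<and> g = g'" by simp
  qed
  have "(\<Sum>l\<in>PiE (insert x S) T. f l) = (\<Sum>yg\<in>T x \<times> PiE S T. f ((\<lambda>(y, g). g(x := y)) yg))"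
    unfolding PiE_insert_eq by (rule sum.reindex[OF inj, unfolded comp_def])
  also have "\<dots> = (\<Sum>y\<in>T x. \<Sum>g\<in>PiE S T. f (g(x := y)))"
    by (simp add: sum.cartesian_product split_def)
  finally show ?thesis .
qed

lemma gcal_gen:
  "(\<Sum>l\<in>PiE {..<i} (\<lambda>_. {..<r^2}).
        (\<Prod>j<i. (1 - bitv b j) * pprev p l j (\<omega> ^ l j * \<alpha> j)
                 + bitv b j * pprev p l j ((\<omega> ^ l j * \<alpha> j) ^ (2 ^ j * n * r^2)))
        * pprev p l i s) = poly (gp n r \<omega> p i b \<alpha>) (s :: 'a::field)"
proof (induction i arbitrary: s)
  case 0
  show ?case by (simp add: pprev_def)
next
  case (Suc i)
  let ?F = "\<lambda>l j. pprev p l j (phi n r j b (\<omega> ^ l j * \<alpha> j))"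
  have "(\<Sum>l\<in>PiE {..<Suc i} (\<lambda>_. {..<r^2}).
        (\<Prod>j<Suc i. (1 - bitv b j) * pprev p l j (\<omega> ^ l j * \<alpha> j)
                 + bitv b j * pprev p l j ((\<omega> ^ l j * \<alpha> j) ^ (2 ^ j * n * r^2)))
        * pprev p l (Suc i) s)
      = (\<Sum>l\<in>PiE (insert i {..<i}) (\<lambda>_. {..<r^2}). (\<Prod>j<Suc i. ?F l j) * pprev p l (Suc i) s)"
    by (simp only: bitv_factor lessThan_Suc)
  also have "\<dots> = (\<Sum>y<r^2. \<Sum>g\<in>PiE {..<i} (\<lambda>_. {..<r^2}). (\<Prod>j<Suc i. ?F (g(i:=y)) j) * pprev p (g(i:=y)) (Suc i) s)"
    by (rule sum_PiE_insert) simp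
  also have "\<dots> = (\<Sum>y<r^2. (\<Sum>g\<in>PiE {..<i} (\<lambda>_. {..<r^2}). (\<Prod>j<i. ?F g j) * pprev p g i (phi n r i b (\<omega> ^ y * \<alpha> i))) * poly (p y) s)"
  proof (rule sum.cong[OF refl])
    fix y
    show "(\<Sum>g\<in>PiE {..<i} (\<lambda>_. {..<r^2}). (\<Prod>j<Suc i. ?F (g(i:=y)) j) * pprev p (g(i:=y)) (Suc i) s)
      = (\<Sum>g\<in>PiE {..<i} (\<lambda>_. {..<r^2}). (\<Prod>j<i. ?F g j) * pprev p g i (phi n r i b (\<omega> ^ y * \<alpha> i))) * poly (p y) s"
      unfolding sum_distrib_right
    proof (rule sum.cong[OF refl])
      fix g
      have pj: "(\<Prod>j<i. ?F (g(i:=y)) j) = (\<Prod>j<i. ?F g j)"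
        by (rule prod.cong[OF refl]) (auto simp: pprev_def)
      have pi: "?F (g(i:=y)) i = pprev p g i (phi n r i b (\<omega> ^ y * \<alpha> i))"
        by (auto simp: pprev_def)
      show "(\<Prod>j<Suc i. ?F (g(i:=y)) j) * pprev p (g(i:=y)) (Suc i) s
          = (\<Prod>j<i. ?F g j) * pprev p g i (phi n r i b (\<omega> ^ y * \<alpha> i)) * poly (p y) s"
        unfolding prod.lessThan_Suc pj pi by (simp add: pprev_def)
    qed
  qed
  also have "\<dots> = (\<Sum>y<r^2. poly (gp n r \<omega> p i b \<alpha>) (phi n r i b (\<omega> ^ y * \<alpha> i)) * poly (p y) s)"
    using Suc.IH[symmetric] by (simp only: bitv_factor)
  also have "\<dots> = poly (gp n r \<omega> p (Suc i) b \<alpha>) s"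
    by (simp add: poly_sum)
  finally show ?case .
qed

lemma gcal_eq: "Gcal n r d \<omega> p b \<alpha> = poly (gp n r \<omega> p d b \<alpha>) (\<alpha> d)"
  unfolding Gcal_def by (rule gcal_gen)


definition fprod :: "nat \<Rightarrow> 'a::comm_ring_1 mat list \<Rightarrow> 'a mat" where
  "fprod r As = foldl (*) (1\<^sub>m r) As"

lemma foldl_mult_carrier:
  "A \<in> carrier_mat r r \<Longrightarrow> \<forall>B\<in>set As. B \<in> carrier_mat r r \<Longrightarrow> foldl (*) A As \<in> carrier_mat r r"
  by (induction As arbitrary: A) auto

lemma foldl_mult_assoc:
  fixes A :: "'a::comm_ring_1 mat"
  shows "A \<in> carrier_mat r r \<Longrightarrow> \<forall>B\<in>set As. B \<in> carrier_mat r r \<Longrightarrow> foldl (*) A As = A * foldl (*) (1\<^sub>m r) As"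
proof (induction As arbitrary: A)
  case Nil
  thus ?case by simp
next
  case (Cons B As)
  have B: "B \<in> carrier_mat r r" using Cons.prems by simp
  have As: "\<forall>B\<in>set As. B \<in> carrier_mat r r" using Cons.prems by simp
  have "foldl (*) A (B # As) = (A * B) * foldl (*) (1\<^sub>m r) As"
    using Cons.IH[of "A * B"] Cons.prems B As by simp
  also have "\<dots> = A * (B * foldl (*) (1\<^sub>m r) As)"
    using Cons.prems B foldl_mult_carrier[OF one_carrier_mat As] by (simp add: assoc_mult_mat)
  also have "B * foldl (*) (1\<^sub>m r) As = foldl (*) B As" using Cons.IH[OF B As] by simp
  also have "\<dots> = foldl (*) (1\<^sub>m r) (B # As)" using B by simp
  finally show ?case .
qed

lemma fprod_carrier: "\<forall>B\<in>set As. B \<in> carrier_mat r r \<Longrightarrow> fprod r As \<in> carrier_mat r r"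
  unfolding fprod_def by (rule foldl_mult_carrier) auto

lemma fprod_append:
  "\<forall>B\<in>set (xs @ ys). B \<in> carrier_mat r r \<Longrightarrow> fprod r (xs @ ys) = fprod r xs * fprod r (ys :: 'a::comm_ring_1 mat list)"
  unfolding fprod_def foldl_append
  by (rule foldl_mult_assoc) (auto intro: foldl_mult_carrier)

lemma fprod_snoc:
  "\<forall>B\<in>set (xs @ [x]). B \<in> carrier_mat r r \<Longrightarrow> fprod r (xs @ [x]) = fprod r xs * (x :: 'a::comm_ring_1 mat)"
  by (subst fprod_append) (auto simp: fprod_def)

lemma mat_prod_list_fprod: "mat_prod_list r As = fprod r As"
  unfolding mat_prod_list_def fprod_def ..

lemma ev_fprod:
  fixes As :: "'a::field poly mat list"
  shows "\<forall>B\<in>set As. B \<in> carrier_mat r r \<Longrightarrow>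
    map_mat (\<lambda>q. poly q t) (fprod r As) = fprod r (map (map_mat (\<lambda>q. poly q t)) As)"
proof (induction As rule: rev_induct)
  case Nil
  show ?case by (simp add: fprod_def semiring_hom.mat_hom_one[OF poly_hom.semiring_hom_axioms])
next
  case (snoc x xs)
  have xs: "\<forall>B\<in>set xs. B \<in> carrier_mat r r" and x: "x \<in> carrier_mat r r" using snoc.prems by auto
  have "map_mat (\<lambda>q. poly q t) (fprod r (xs @ [x])) = map_mat (\<lambda>q. poly q t) (fprod r xs * x)"
    using snoc.prems by (simp add: fprod_snoc)
  also have "\<dots> = map_mat (\<lambda>q. poly q t) (fprod r xs) * map_mat (\<lambda>q. poly q t) x"
    by (rule semiring_hom.mat_hom_mult[OF poly_hom.semiring_hom_axioms fprod_carrier[OF xs] x])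
  also have "\<dots> = fprod r (map (map_mat (\<lambda>q. poly q t)) xs) * map_mat (\<lambda>q. poly q t) x"
    using snoc.IH xs by simp
  also have "\<dots> = fprod r (map (map_mat (\<lambda>q. poly q t)) xs @ [map_mat (\<lambda>q. poly q t) x])"
    using xs x by (subst fprod_snoc) auto
  also have "\<dots> = fprod r (map (map_mat (\<lambda>q. poly q t)) (xs @ [x]))" by simp
  finally show ?case .
qed

lemma deg_fprod:
  fixes As :: "'a::field poly mat list"
  shows "\<forall>B\<in>set As. B \<in> carrier_mat r r \<and> (\<forall>i<r. \<forall>j<r. degree (B $$ (i,j)) \<le> D) \<Longrightarrow>
    \<forall>i<r. \<forall>j<r. degree (fprod r As $$ (i,j)) \<le> length As * D"
proof (induction As rule: rev_induct)
  case Nil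
  show ?case by (auto simp: fprod_def one_mat_def)
next
  case (snoc x xs)
  have xs: "\<forall>B\<in>set xs. B \<in> carrier_mat r r" and x: "x \<in> carrier_mat r r" using snoc.prems by auto
  have IH: "\<forall>i<r. \<forall>j<r. degree (fprod r xs $$ (i,j)) \<le> length xs * D" using snoc.IH snoc.prems by simp
  show ?case
  proof (intro allI impI)
    fix i j assume ij: "i < r" "j < r"
    have "fprod r (xs @ [x]) $$ (i,j) = (\<Sum>l<r. fprod r xs $$ (i,l) * x $$ (l,j))"
      using snoc.prems xs x ij by (simp add: fprod_snoc mult_entry[OF fprod_carrier[OF xs] x])
    also have "degree \<dots> \<le> length xs * D + D"
    proof (rule degree_sum_le)
      fix l assume l: "l \<in> {..<r}"
      have "degree (fprod r xs $$ (i,l) * x $$ (l,j)) \<le> degree (fprod r xs $$ (i,l)) + degree (x $$ (l,j))"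
        by (rule degree_mult_le)
      also have "\<dots> \<le> length xs * D + D" using IH snoc.prems ij l by (intro add_mono) auto
      finally show "degree (fprod r xs $$ (i,l) * x $$ (l,j)) \<le> length xs * D + D" .
    qed simp
    finally show "degree (fprod r (xs @ [x]) $$ (i,j)) \<le> length (xs @ [x]) * D" by simp
  qed
qed


definition TP :: "nat \<Rightarrow> nat \<Rightarrow> 'a::field \<Rightarrow> (nat \<Rightarrow> 'a poly) \<Rightarrow> (nat \<Rightarrow> 'a poly mat) \<Rightarrow> nat \<Rightarrow> nat \<Rightarrow> (nat \<Rightarrow> 'a) \<Rightarrow> 'a poly mat" where
  "TP n r \<omega> p M i c \<alpha> = fprod r (map (\<lambda>b'. map_mat (\<lambda>q. q \<circ>\<^sub>p gp n r \<omega> p i (b' + 2^i*c) \<alpha>) (M (b' + 2^i*c))) [0..<2^i])"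

definition Tv :: "nat \<Rightarrow> nat \<Rightarrow> 'a::field \<Rightarrow> (nat \<Rightarrow> 'a poly) \<Rightarrow> (nat \<Rightarrow> 'a poly mat) \<Rightarrow> nat \<Rightarrow> nat \<Rightarrow> (nat \<Rightarrow> 'a) \<Rightarrow> 'a \<Rightarrow> 'a mat" where
  "Tv n r \<omega> p M i c \<alpha> s = mat_prod_list r (map (\<lambda>b'. map_mat (\<lambda>q. poly q (poly (gp n r \<omega> p i (b' + 2^i*c) \<alpha>) s)) (M (b' + 2^i*c))) [0..<2^i])"

definition Full :: "nat \<Rightarrow> (nat \<Rightarrow> 'a::field poly mat) \<Rightarrow> nat \<Rightarrow> nat \<Rightarrow> (nat \<Rightarrow> 'a) \<Rightarrow> 'a mat" where
  "Full r M i c x = mat_prod_list r (map (\<lambda>b'. map_mat (\<lambda>q. poly q (x b')) (M (b' + 2^i*c))) [0..<2^i])"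

lemma upt_double: "[0..<2^Suc i] = [0..<2^i] @ map (\<lambda>b. b + 2^i) [0..<(2::nat)^i]"
proof -
  have "[0..<2^Suc i] = [0..<2^i + 2^i]" by (simp add: mult_2)
  also have "\<dots> = [0..<2^i] @ [2^i..<2^i + 2^i]" by (rule upt_add_eq_append) simp
  also have "[2^i..<2^i + 2^i] = map (\<lambda>b. b + 2^i) [0..<(2::nat)^i]" by (simp add: map_add_upt)
  finally show ?thesis .
qed

lemma idx_lt: assumes "i \<le> d" "c < 2^(d-i)" "b' < 2^i" shows "b' + 2^i*c < (2::nat)^d"
proof -
  have "b' + 2^i*c < 2^i*(c+1)" using assms(3) by simp
  also have "\<dots> \<le> 2^i * 2^(d-i)" using assms(2) by (intro mult_le_mono2) simp
  also have "\<dots> = 2^d" using assms(1) by (simp add: power_add[symmetric])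
  finally show ?thesis .
qed

lemma idx_lo: "(b'::nat) + 2^Suc i * c = b' + 2^i * (2*c)" by simp
lemma idx_hi: "((b'::nat) + 2^i) + 2^Suc i * c = b' + 2^i * (2*c+1)" by (simp add: algebra_simps)

lemma div_idx: "b' < 2^i \<Longrightarrow> (b' + 2^i * e) div 2^i = (e::nat)" by simp

lemma ball_map_upt: "(\<And>b. b < k \<Longrightarrow> f b \<in> A) \<Longrightarrow> \<forall>B\<in>set (map f [0..<k]). B \<in> A" by auto

lemma fprod_append2:
  "\<forall>B\<in>set xs. B \<in> carrier_mat r r \<Longrightarrow> \<forall>B\<in>set ys. B \<in> carrier_mat r r \<Longrightarrow>
   fprod r (xs @ ys) = fprod r xs * fprod r (ys :: 'a::comm_ring_1 mat list)"
  by (rule fprod_append) auto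

lemma map_mat_pcomp: "map_mat (\<lambda>q. poly q s) (map_mat (\<lambda>q. q \<circ>\<^sub>p g) A) = map_mat (\<lambda>q. poly q (poly g s)) A"
  by (rule eq_matI) (auto simp: poly_pcompose)

context
  fixes n r d :: nat and \<omega> :: "'a::field" and \<beta> :: "nat \<Rightarrow> 'a" and p :: "nat \<Rightarrow> 'a poly" and M :: "nat \<Rightarrow> 'a poly mat"
  assumes n1: "n \<ge> 1" and r1: "r \<ge> 1"
    and card: "infinite (UNIV :: 'a set) \<or> card (UNIV :: 'a set) > (2 ^ d * n * r ^ 3) ^ 2"
    and om0: "\<omega> \<noteq> 0"
    and omo: "\<forall>k. 0 < k \<and> k < (2 ^ d * n * r ^ 2) ^ 2 \<longrightarrow> \<omega> ^ k \<noteq> 1"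
    and hp: "\<forall>l<r^2. degree (p l) < r^2 \<and> (\<forall>i<r^2. poly (p l) (\<beta> i) = (if i = l then 1 else 0))"
    and hM: "\<forall>b<2^d. M b \<in> carrier_mat r r \<and> (\<forall>i<r. \<forall>j<r. degree (M b $$ (i, j)) < n)"
begin

lemma hpdeg: "\<forall>l<r^2. degree (p l) < r^2" using hp by blast
lemma hpval: "\<forall>l<r^2. \<forall>i<r^2. poly (p l) (\<beta> i) = (if i = l then 1 else 0)" using hp by blast

lemma Mc: "i \<le> d \<Longrightarrow> c < 2^(d-i) \<Longrightarrow> b' < 2^i \<Longrightarrow> M (b' + 2^i*c) \<in> carrier_mat r r"
  using hM idx_lt by blast

lemma Md: "i \<le> d \<Longrightarrow> c < 2^(d-i) \<Longrightarrow> b' < 2^i \<Longrightarrow> k < r \<Longrightarrow> l < r \<Longrightarrow> degree (M (b' + 2^i*c) $$ (k,l)) < n"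
  using hM idx_lt by blast

lemma TP_carrier: "i \<le> d \<Longrightarrow> c < 2^(d-i) \<Longrightarrow> TP n r \<omega> p M i c \<alpha> \<in> carrier_mat r r"
  unfolding TP_def by (rule fprod_carrier) (auto dest: Mc)

lemma Tv_eq: assumes "i \<le> d" "c < 2^(d-i)"
  shows "Tv n r \<omega> p M i c \<alpha> s = map_mat (\<lambda>q. poly q s) (TP n r \<omega> p M i c \<alpha>)"
proof -
  have "map_mat (\<lambda>q. poly q s) (TP n r \<omega> p M i c \<alpha>)
     = fprod r (map (map_mat (\<lambda>q. poly q s)) (map (\<lambda>b'. map_mat (\<lambda>q. q \<circ>\<^sub>p gp n r \<omega> p i (b' + 2^i*c) \<alpha>) (M (b' + 2^i*c))) [0..<2^i]))"
    unfolding TP_def by (rule ev_fprod) (use assms in \<open>auto dest: Mc\<close>)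
  also have "\<dots> = Tv n r \<omega> p M i c \<alpha> s"
    unfolding Tv_def mat_prod_list_fprod map_map comp_def map_mat_pcomp ..
  finally show ?thesis by simp
qed

lemma Tv_carrier: "i \<le> d \<Longrightarrow> c < 2^(d-i) \<Longrightarrow> Tv n r \<omega> p M i c \<alpha> s \<in> carrier_mat r r"
  using Tv_eq TP_carrier by simp

lemma TP_deg: assumes "i \<le> d" "c < 2^(d-i)"
  shows "\<forall>k<r. \<forall>l<r. degree (TP n r \<omega> p M i c \<alpha> $$ (k,l)) < 2^i * n * r^2"
proof -
  have hB: "\<forall>B\<in>set (map (\<lambda>b'. map_mat (\<lambda>q. q \<circ>\<^sub>p gp n r \<omega> p i (b' + 2^i*c) \<alpha>) (M (b' + 2^i*c))) [0..<2^i]).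
     B \<in> carrier_mat r r \<and> (\<forall>k<r. \<forall>l<r. degree (B $$ (k, l)) \<le> (n - 1) * r^2)"
  proof (intro ballI)
    fix B assume "B \<in> set (map (\<lambda>b'. map_mat (\<lambda>q. q \<circ>\<^sub>p gp n r \<omega> p i (b' + 2^i*c) \<alpha>) (M (b' + 2^i*c))) [0..<2^i])"
    then obtain b' where b': "b' < 2^i" and B: "B = map_mat (\<lambda>q. q \<circ>\<^sub>p gp n r \<omega> p i (b' + 2^i*c) \<alpha>) (M (b' + 2^i*c))" by auto
    show "B \<in> carrier_mat r r \<and> (\<forall>k<r. \<forall>l<r. degree (B $$ (k, l)) \<le> (n - 1) * r^2)"
    proof (intro conjI allI impI)
      show "B \<in> carrier_mat r r" unfolding B using Mc[OF assms b'] by simp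
      fix k l assume kl: "k < r" "l < r"
      have "B $$ (k,l) = M (b' + 2^i*c) $$ (k, l) \<circ>\<^sub>p gp n r \<omega> p i (b' + 2^i*c) \<alpha>"
        unfolding B using Mc[OF assms b'] kl by simp
      hence "degree (B $$ (k,l)) = degree (M (b' + 2^i*c) $$ (k, l)) * degree (gp n r \<omega> p i (b' + 2^i*c) \<alpha>)"
        by (simp add: degree_pcompose)
      also have "\<dots> \<le> (n - 1) * r^2"
        using Md[OF assms b' kl] gp_degree[OF r1 hpdeg] by (intro mult_mono) auto
      finally show "degree (B $$ (k,l)) \<le> (n - 1) * r^2" .
    qed
  qed
  have "\<forall>k<r. \<forall>l<r. degree (TP n r \<omega> p M i c \<alpha> $$ (k,l)) \<le> length [0..<2^i] * ((n - 1) * r^2)"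
    using deg_fprod[OF hB] unfolding TP_def length_map .
  moreover have "length [0..<2^i] * ((n - 1) * r^2) < 2^i * n * r^2"
  proof -
    have "0 < 2^i * r^2" using r1 by simp
    hence "2^i * ((n - 1) * r^2) < 2^i * (n * r^2)" using n1 by simp
    thus ?thesis by (simp add: mult.assoc)
  qed
  ultimately show ?thesis by (meson le_less_trans)
qed

lemma Full_split: assumes "Suc i \<le> d" "c < 2^(d - Suc i)"
  shows "Full r M (Suc i) c x = Full r M i (2*c) x * Full r M i (2*c+1) (\<lambda>b'. x (b' + 2^i))"
proof -
  have c1: "2*c < 2^(d-i)" "2*c+1 < 2^(d-i)"
    using assms by (auto simp: Suc_diff_Suc[symmetric] simp del: Suc_diff_Suc)
  have "Full r M (Suc i) c x = fprod r (map (\<lambda>b'. map_mat (\<lambda>q. poly q (x b')) (M (b' + 2^i*(2*c)))) [0..<2^i]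
       @ map (\<lambda>b'. map_mat (\<lambda>q. poly q (x (b' + 2^i))) (M (b' + 2^i*(2*c+1)))) [0..<2^i])"
    unfolding Full_def mat_prod_list_fprod upt_double map_append map_map comp_def idx_hi unfolding idx_lo ..
  also have "\<dots> = Full r M i (2*c) x * Full r M i (2*c+1) (\<lambda>b'. x (b' + 2^i))"
    unfolding Full_def mat_prod_list_fprod
  proof (rule fprod_append2)
    have i: "i \<le> d" using assms by simp
    show "\<forall>B\<in>set (map (\<lambda>b'. map_mat (\<lambda>q. poly q (x b')) (M (b' + 2^i*(2*c)))) [0..<2^i]). B \<in> carrier_mat r r"
      by (intro ball_map_upt map_carrier_mat[THEN iffD2] Mc[OF i c1(1)])
    show "\<forall>B\<in>set (map (\<lambda>b'. map_mat (\<lambda>q. poly q (x (b' + 2^i))) (M (b' + 2^i*(2*c+1)))) [0..<2^i]). B \<in> carrier_mat r r"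
      by (intro ball_map_upt map_carrier_mat[THEN iffD2] Mc[OF i c1(2)])
  qed
  finally show ?thesis .
qed

lemma Tv_split: assumes "Suc i \<le> d" "c < 2^(d - Suc i)" "m < r^2"
  shows "Tv n r \<omega> p M (Suc i) c \<alpha> (\<beta> m) = Tv n r \<omega> p M i (2*c) \<alpha> (\<omega>^m * \<alpha> i)
           * Tv n r \<omega> p M i (2*c+1) \<alpha> ((\<omega>^m * \<alpha> i) ^ (2^i * n * r^2))"
proof -
  have c1: "2*c < 2^(d-i)" "2*c+1 < 2^(d-i)"
    using assms by (auto simp: Suc_diff_Suc[symmetric] simp del: Suc_diff_Suc)
  have lo: "poly (gp n r \<omega> p (Suc i) (b' + 2^i*(2*c)) \<alpha>) (\<beta> m) = poly (gp n r \<omega> p i (b' + 2^i*(2*c)) \<alpha>) (\<omega>^m * \<alpha> i)"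
    if "b' < 2^i" for b'
  proof -
    have "(b' + 2^i*(2*c)) div 2^i = 2*c" by (rule div_idx[OF that])
    hence e: "phi n r i (b' + 2^i*(2*c)) u = u" for u :: 'a unfolding phi_def by simp
    show ?thesis using gp_beta[OF hpval assms(3), where n=n and \<omega>=\<omega> and i=i and b="b' + 2^i*(2*c)" and \<alpha>=\<alpha>]
      by (simp only: e)
  qed
  have hi: "poly (gp n r \<omega> p (Suc i) (b' + 2^i*(2*c+1)) \<alpha>) (\<beta> m) = poly (gp n r \<omega> p i (b' + 2^i*(2*c+1)) \<alpha>) ((\<omega>^m * \<alpha> i) ^ (2^i * n * r^2))"
    if "b' < 2^i" for b'
  proof -
    have "(b' + 2^i*(2*c+1)) div 2^i = 2*c+1" by (rule div_idx[OF that])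
    hence "odd ((b' + 2^i*(2*c+1)) div 2^i)" by simp
    hence e: "phi n r i (b' + 2^i*(2*c+1)) u = u ^ (2^i * n * r^2)" for u :: 'a unfolding phi_def by simp
    show ?thesis using gp_beta[OF hpval assms(3), where n=n and \<omega>=\<omega> and i=i and b="b' + 2^i*(2*c+1)" and \<alpha>=\<alpha>]
      by (simp only: e)
  qed
  have "Tv n r \<omega> p M (Suc i) c \<alpha> (\<beta> m) =
     fprod r (map (\<lambda>b'. map_mat (\<lambda>q. poly q (poly (gp n r \<omega> p (Suc i) (b' + 2^i*(2*c)) \<alpha>) (\<beta> m))) (M (b' + 2^i*(2*c)))) [0..<2^i]
       @ map (\<lambda>b'. map_mat (\<lambda>q. poly q (poly (gp n r \<omega> p (Suc i) (b' + 2^i*(2*c+1)) \<alpha>) (\<beta> m))) (M (b' + 2^i*(2*c+1)))) [0..<2^i])"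
    unfolding Tv_def mat_prod_list_fprod upt_double map_append map_map comp_def idx_hi unfolding idx_lo ..
  also have "\<dots> = fprod r (map (\<lambda>b'. map_mat (\<lambda>q. poly q (poly (gp n r \<omega> p i (b' + 2^i*(2*c)) \<alpha>) (\<omega>^m * \<alpha> i))) (M (b' + 2^i*(2*c)))) [0..<2^i]
       @ map (\<lambda>b'. map_mat (\<lambda>q. poly q (poly (gp n r \<omega> p i (b' + 2^i*(2*c+1)) \<alpha>) ((\<omega>^m * \<alpha> i) ^ (2^i * n * r^2)))) (M (b' + 2^i*(2*c+1)))) [0..<2^i])"
    using lo hi by (intro arg_cong[where f="fprod r"] arg_cong2[where f="(@)"] map_cong refl) auto
  also have "\<dots> = Tv n r \<omega> p M i (2*c) \<alpha> (\<omega>^m * \<alpha> i) * Tv n r \<omega> p M i (2*c+1) \<alpha> ((\<omega>^m * \<alpha> i) ^ (2^i * n * r^2))"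
    unfolding Tv_def mat_prod_list_fprod
  proof (rule fprod_append2)
    have i: "i \<le> d" using assms by simp
    show "\<forall>B\<in>set (map (\<lambda>b'. map_mat (\<lambda>q. poly q (poly (gp n r \<omega> p i (b' + 2^i*(2*c)) \<alpha>) (\<omega>^m * \<alpha> i))) (M (b' + 2^i*(2*c)))) [0..<2^i]). B \<in> carrier_mat r r"
      by (intro ball_map_upt map_carrier_mat[THEN iffD2] Mc[OF i c1(1)])
    show "\<forall>B\<in>set (map (\<lambda>b'. map_mat (\<lambda>q. poly q (poly (gp n r \<omega> p i (b' + 2^i*(2*c+1)) \<alpha>) ((\<omega>^m * \<alpha> i) ^ (2^i * n * r^2)))) (M (b' + 2^i*(2*c+1)))) [0..<2^i]). B \<in> carrier_mat r r"
      by (intro ball_map_upt map_carrier_mat[THEN iffD2] Mc[OF i c1(2)])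
  qed
  finally show ?thesis .
qed

lemma Tv_indep: "(\<forall>j<i. \<alpha> j = \<alpha>' j) \<Longrightarrow> Tv n r \<omega> p M i c \<alpha> = Tv n r \<omega> p M i c \<alpha>'"
  unfolding Tv_def using gp_indep[of i \<alpha> \<alpha>'] by (intro ext) simp

definition Good :: "nat \<Rightarrow> (nat \<Rightarrow> 'a) \<Rightarrow> bool" where
  "Good i \<alpha> = (\<forall>c < 2^(d-i). \<forall>x. Full r M i c x \<in> mat_span r (range (Tv n r \<omega> p M i c \<alpha>)))"

lemma Good0: "Good 0 \<alpha>"
  unfolding Good_def
proof (intro allI impI)
  fix c :: nat and x :: "nat \<Rightarrow> 'a" assume c: "c < 2^(d-0)"
  have "Full r M 0 c x = Tv n r \<omega> p M 0 c \<alpha> (x 0)"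
    unfolding Full_def Tv_def by simp
  also have "\<dots> \<in> mat_span r (range (Tv n r \<omega> p M 0 c \<alpha>))"
    by (rule mspan_base) (use Tv_carrier c in auto)
  finally show "Full r M 0 c x \<in> mat_span r (range (Tv n r \<omega> p M 0 c \<alpha>))" .
qed


lemma om_dist:
  assumes i: "i < d"
  shows "\<forall>k k'. k < (2^i*n*r^2)*(2^i*n*r^2) \<longrightarrow> k' < (2^i*n*r^2)*(2^i*n*r^2) \<longrightarrow> \<omega>^k = \<omega>^k' \<longrightarrow> k = k'"
proof (intro allI impI)
  fix k k' assume k: "k < (2^i*n*r^2)*(2^i*n*r^2)" and k': "k' < (2^i*n*r^2)*(2^i*n*r^2)" and eq: "\<omega>^k = \<omega>^k'"
  have "2^i*n*r^2 \<le> 2^d*n*r^2" using i by (intro mult_le_mono1) simp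
  hence KK: "(2^i*n*r^2)*(2^i*n*r^2) \<le> (2^d*n*r^2)^2" by (simp add: power2_eq_square mult_le_mono)
  have gen: "a < b \<Longrightarrow> b < (2^d*n*r^2)^2 \<Longrightarrow> \<omega>^a = \<omega>^b \<Longrightarrow> False" for a b
  proof -
    assume ab: "a < b" "b < (2^d*n*r^2)^2" "\<omega>^a = \<omega>^b"
    have "\<omega>^b = \<omega>^a * \<omega>^(b - a)" using ab(1) by (simp add: power_add[symmetric])
    hence "\<omega>^a * \<omega>^(b - a) = \<omega>^a * 1" using ab(3) by simp
    hence "\<omega>^(b - a) = 1" using om0 by simp
    moreover have "0 < b - a" "b - a < (2^d*n*r^2)^2" using ab by auto
    ultimately show False using omo by blast
  qed
  show "k = k'"
  proof (rule ccontr)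
    assume "k \<noteq> k'"
    hence "k < k' \<or> k' < k" by auto
    thus False using gen[of k k'] gen[of k' k] eq k k' KK by auto
  qed
qed

lemma K_le: assumes i: "i < d" shows "2^i*n*r^2 \<le> 2^d*n*r^3"
proof -
  have "(2::nat)^i \<le> 2^d" using i by simp
  moreover have "r^2 \<le> r^3" using r1 by (simp add: power_increasing)
  ultimately show ?thesis by (intro mult_le_mono) auto
qed

lemma pts_KK: assumes i: "i < d"
  shows "infinite (UNIV :: 'a set) \<or> (2^i*n*r^2)*(2^i*n*r^2) \<le> card (UNIV :: 'a set)"
proof -
  have "(2^i*n*r^2)*(2^i*n*r^2) \<le> (2^d*n*r^3)^2"
    using K_le[OF i] by (simp add: power2_eq_square mult_le_mono)
  thus ?thesis using card by auto
qed

lemma card_bound: assumes i: "i < d" and fin: "finite (UNIV :: 'a set)"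
  shows "2^(d - Suc i) * (1 + r^2 * ((2^i*n*r^2)*(2^i*n*r^2))) < card (UNIV :: 'a set)"
proof -
  define X :: nat where "X = 2^(d - Suc i)"
  define A :: nat where "A = 2^i"
  define B :: nat where "B = 2^d"
  define rr where "rr = r^2"
  have hX: "X * 2 * A = B" unfolding X_def A_def B_def using i
    by (simp add: power_add[symmetric] power_Suc[symmetric] mult.commute[of _ 2] Suc_diff_Suc)
  have AB: "A < B" unfolding A_def B_def using i by simp
  have pos: "0 < n * n * (rr * rr * rr)" using n1 r1 unfolding rr_def by simp
  have e1: "r^2 * ((2^i*n*r^2)*(2^i*n*r^2)) = A * A * (n * n * (rr * rr * rr))"
    unfolding A_def rr_def by (simp add: algebra_simps)
  have "0 < r^2 * ((2^i*n*r^2)*(2^i*n*r^2))" by (intro mult_pos_pos) (use n1 r1 in auto)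
  hence "1 \<le> r^2 * ((2^i*n*r^2)*(2^i*n*r^2))" by linarith
  hence "X * (1 + r^2 * ((2^i*n*r^2)*(2^i*n*r^2))) \<le> X * (2 * (r^2 * ((2^i*n*r^2)*(2^i*n*r^2))))"
    by (intro mult_le_mono2) linarith
  also have "\<dots> = (X * 2 * A) * (A * (n * n * (rr * rr * rr)))" unfolding e1 by (simp add: algebra_simps)
  also have "\<dots> = B * (A * (n * n * (rr * rr * rr)))" unfolding hX ..
  also have "\<dots> < B * (B * (n * n * (rr * rr * rr)))"
    using AB pos by (intro mult_strict_left_mono) (auto simp: B_def)
  also have "\<dots> = (2 ^ d * n * r ^ 3) ^ 2"
  proof -
    have "r^3 * r^3 = rr * rr * rr" unfolding rr_def by (simp flip: power_add)
    thus ?thesis unfolding B_def by (simp add: power2_eq_square algebra_simps)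
  qed
  also have "\<dots> < card (UNIV :: 'a set)" using card fin by simp
  finally show ?thesis unfolding X_def .
qed

lemma Good_step:
  assumes i: "i < d" and G: "Good i \<alpha>"
  shows "\<exists>a. Good (Suc i) (\<alpha>(i := a))"
proof -
  define K where "K = 2^i*n*r^2"
  define X :: nat where "X = 2^(d - Suc i)"
  define R where "R = r^2"
  define A where "A c = TP n r \<omega> p M i (2*c) \<alpha>" for c
  define B where "B c = TP n r \<omega> p M i (2*c+1) \<alpha>" for c
  define CP where "CP c = A c * kr K (B c)" for c
  have id: "i \<le> d" using i by simp
  have c1: "2*c < 2^(d-i)" "2*c+1 < 2^(d-i)" if "c < X" for c
    using that i unfolding X_def by (auto simp: Suc_diff_Suc[symmetric] simp del: Suc_diff_Suc)
  have Ac: "A c \<in> carrier_mat r r" "B c \<in> carrier_mat r r" if "c < X" for c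
    unfolding A_def B_def using TP_carrier[OF id c1(1)[OF that]] TP_carrier[OF id c1(2)[OF that]] by auto
  have Ad: "\<forall>k<r. \<forall>l<r. degree (A c $$ (k,l)) < K" "\<forall>k<r. \<forall>l<r. degree (B c $$ (k,l)) < K" if "c < X" for c
    unfolding A_def B_def K_def using TP_deg[OF id c1(1)[OF that]] TP_deg[OF id c1(2)[OF that]] by auto
  have CPc: "CP c \<in> carrier_mat r r" if "c < X" for c unfolding CP_def using Ac[OF that] by simp
  have CPd: "\<forall>k<r. \<forall>l<r. degree (CP c $$ (k,l)) < K * K" if "c < X" for c
    unfolding CP_def by (rule deg_kron[OF Ac[OF that] Ad[OF that]])
  have omK: "\<forall>k k'. k < K * K \<longrightarrow> k' < K * K \<longrightarrow> \<omega>^k = \<omega>^k' \<longrightarrow> k = k'"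
    using om_dist[OF i] unfolding K_def .
  have RR: "r * r \<le> R" unfolding R_def by (simp add: power2_eq_square)
  have "\<forall>c\<in>{..<X}. \<exists>Bad. finite Bad \<and> card Bad \<le> 1 + R * (K * K) \<and>
     (\<forall>a. a \<notin> Bad \<longrightarrow> (\<forall>t. map_mat (\<lambda>q. poly q t) (CP c) \<in> mat_span r ((\<lambda>l. map_mat (\<lambda>q. poly q (\<omega>^l * a)) (CP c)) ` {..<R})))"
    using rank_condenser[OF CPc CPd omK RR] by blast
  then obtain BadF where BadF: "\<And>c. c \<in> {..<X} \<Longrightarrow> finite (BadF c) \<and> card (BadF c) \<le> 1 + R * (K * K) \<and>
     (\<forall>a. a \<notin> BadF c \<longrightarrow> (\<forall>t. map_mat (\<lambda>q. poly q t) (CP c) \<in> mat_span r ((\<lambda>l. map_mat (\<lambda>q. poly q (\<omega>^l * a)) (CP c)) ` {..<R})))"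
    by (metis bchoice)
  define U where "U = (\<Union>c\<in>{..<X}. BadF c)"
  have finU: "finite U" unfolding U_def using BadF by auto
  have "card U \<le> (\<Sum>c\<in>{..<X}. card (BadF c))" unfolding U_def by (rule card_UN_le) simp
  also have "\<dots> \<le> (\<Sum>c\<in>{..<X}. 1 + R * (K * K))" using BadF by (intro sum_mono) auto
  also have "\<dots> = X * (1 + R * (K * K))" by simp
  finally have cardU: "card U \<le> X * (1 + R * (K * K))" .
  obtain a where a: "a \<notin> U"
  proof (cases "finite (UNIV :: 'a set)")
    case True
    have "card U < card (UNIV :: 'a set)"
      using cardU card_bound[OF i True] unfolding X_def R_def K_def by linarith
    hence "U \<noteq> UNIV" by auto
    thus ?thesis using that by blast
  next
    case False
    thus ?thesis using that finU ex_new_if_finite by blast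
  qed
  define \<alpha>' where "\<alpha>' = \<alpha>(i := a)"
  have Tveq: "Tv n r \<omega> p M i c' \<alpha>' = Tv n r \<omega> p M i c' \<alpha>" for c'
    by (rule Tv_indep) (simp add: \<alpha>'_def)
  have "Good (Suc i) \<alpha>'"
    unfolding Good_def
  proof (intro allI impI)
    fix c :: nat and x :: "nat \<Rightarrow> 'a" assume c: "c < 2^(d - Suc i)"
    hence cX: "c < X" unfolding X_def .
    let ?lo = "Tv n r \<omega> p M i (2*c) \<alpha>" and ?hi = "Tv n r \<omega> p M i (2*c+1) \<alpha>"
    have lo_eq: "?lo t = map_mat (\<lambda>q. poly q t) (A c)" for t unfolding A_def by (rule Tv_eq[OF id c1(1)[OF cX]])
    have hi_eq: "?hi t = map_mat (\<lambda>q. poly q t) (B c)" for t unfolding B_def by (rule Tv_eq[OF id c1(2)[OF cX]])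
    have CPev: "map_mat (\<lambda>q. poly q t) (CP c) = ?lo t * ?hi (t^K)" for t
      unfolding CP_def lo_eq hi_eq using Ac[OF cX] by (simp add: ev_mult ev_kr)
    have rl: "range ?lo \<subseteq> carrier_mat r r" "range ?hi \<subseteq> carrier_mat r r"
      using Tv_carrier[OF id c1(1)[OF cX]] Tv_carrier[OF id c1(2)[OF cX]] by auto
    have "Full r M (Suc i) c x = Full r M i (2*c) x * Full r M i (2*c+1) (\<lambda>b'. x (b' + 2^i))"
      by (rule Full_split) (use i c in auto)
    also have "\<dots> \<in> mat_span r {Y * Z |Y Z. Y \<in> range ?lo \<and> Z \<in> range ?hi}"
      by (rule mspan_mult[OF rl]) (use G c1[OF cX] in \<open>auto simp: Good_def\<close>)
    also have "\<dots> \<subseteq> mat_span r (range (\<lambda>t. ?lo t * ?hi (t^K)))"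
    proof (rule mspan_trans, clarify)
      fix s s'
      show "?lo s * ?hi s' \<in> mat_span r (range (\<lambda>t. ?lo t * ?hi (t^K)))"
        unfolding lo_eq hi_eq
        by (rule kron_span[OF Ac[OF cX] Ad[OF cX]]) (use pts_KK[OF i] in \<open>simp add: K_def\<close>)
    qed
    also have "\<dots> \<subseteq> mat_span r ((\<lambda>l. map_mat (\<lambda>q. poly q (\<omega>^l * a)) (CP c)) ` {..<R})"
    proof (rule mspan_trans, clarify)
      fix t
      have "a \<notin> BadF c" using a cX unfolding U_def by auto
      hence "map_mat (\<lambda>q. poly q t) (CP c) \<in> mat_span r ((\<lambda>l. map_mat (\<lambda>q. poly q (\<omega>^l * a)) (CP c)) ` {..<R})"
        using BadF[of c] cX by auto
      thus "?lo t * ?hi (t^K) \<in> mat_span r ((\<lambda>l. map_mat (\<lambda>q. poly q (\<omega>^l * a)) (CP c)) ` {..<R})"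
        unfolding CPev .
    qed
    also have "\<dots> \<subseteq> mat_span r (range (Tv n r \<omega> p M (Suc i) c \<alpha>'))"
    proof (rule mspan_mono, clarify)
      fix l assume l: "l < R"
      have "map_mat (\<lambda>q. poly q (\<omega>^l * a)) (CP c) = Tv n r \<omega> p M i (2*c) \<alpha>' (\<omega>^l * \<alpha>' i) * Tv n r \<omega> p M i (2*c+1) \<alpha>' ((\<omega>^l * \<alpha>' i)^(2^i * n * r^2))"
        unfolding CPev Tveq by (simp add: \<alpha>'_def K_def)
      also have "\<dots> = Tv n r \<omega> p M (Suc i) c \<alpha>' (\<beta> l)"
        by (rule Tv_split[symmetric]) (use i c l in \<open>auto simp: R_def\<close>)
      finally show "map_mat (\<lambda>q. poly q (\<omega>^l * a)) (CP c) \<in> range (Tv n r \<omega> p M (Suc i) c \<alpha>')" by simp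
    qed
    finally show "Full r M (Suc i) c x \<in> mat_span r (range (Tv n r \<omega> p M (Suc i) c \<alpha>'))" .
  qed
  thus ?thesis unfolding \<alpha>'_def by blast
qed

lemma exists_Good: "i \<le> d \<Longrightarrow> \<exists>\<alpha>. Good i \<alpha>"
proof (induction i)
  case 0
  show ?case using Good0 by blast
next
  case (Suc i)
  then obtain \<alpha> where "Good i \<alpha>" by auto
  thus ?case using Good_step[of i \<alpha>] Suc.prems by auto
qed

lemma main_result:
  "mat_span r {mat_prod_list r
            (map (\<lambda>b. map_mat (\<lambda>q. poly q (x b)) (M b)) [0..<2^d]) | x. True}
       = mat_span r {mat_prod_list r
            (map (\<lambda>b. map_mat (\<lambda>q. poly q (Gcal n r d \<omega> p b \<alpha>)) (M b)) [0..<2^d]) | \<alpha>. True}"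
    (is "mat_span r ?L = mat_span r ?R")
proof
  show "mat_span r ?R \<subseteq> mat_span r ?L"
  proof (rule mspan_mono, rule subsetI)
    fix Y assume "Y \<in> ?R"
    then obtain \<alpha> where Y: "Y = mat_prod_list r (map (\<lambda>b. map_mat (\<lambda>q. poly q (Gcal n r d \<omega> p b \<alpha>)) (M b)) [0..<2^d])" by blast
    show "Y \<in> ?L" unfolding Y
      by (rule CollectI, rule exI[where x="\<lambda>b. Gcal n r d \<omega> p b \<alpha>"], simp)
  qed
  obtain \<alpha> where G: "Good d \<alpha>" using exists_Good by blast
  have RT: "range (Tv n r \<omega> p M d 0 \<alpha>) \<subseteq> ?R"
  proof (rule subsetI)
    fix Y assume "Y \<in> range (Tv n r \<omega> p M d 0 \<alpha>)"
    then obtain s where Ys: "Y = Tv n r \<omega> p M d 0 \<alpha> s" by blast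
    define \<alpha>' where "\<alpha>' = \<alpha>(d := s)"
    have "Tv n r \<omega> p M d 0 \<alpha> s = Tv n r \<omega> p M d 0 \<alpha>' s"
      by (rule fun_cong[OF Tv_indep]) (simp add: \<alpha>'_def)
    also have "\<dots> = mat_prod_list r (map (\<lambda>b. map_mat (\<lambda>q. poly q (Gcal n r d \<omega> p b \<alpha>')) (M b)) [0..<2^d])"
      unfolding Tv_def gcal_eq by (simp add: \<alpha>'_def)
    finally show "Y \<in> ?R" unfolding Ys by blast
  qed
  have "?L \<subseteq> mat_span r (range (Tv n r \<omega> p M d 0 \<alpha>))"
  proof clarify
    fix x :: "nat \<Rightarrow> 'a"
    have "mat_prod_list r (map (\<lambda>b. map_mat (\<lambda>q. poly q (x b)) (M b)) [0..<2^d]) = Full r M d 0 x"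
      unfolding Full_def by simp
    also have "\<dots> \<in> mat_span r (range (Tv n r \<omega> p M d 0 \<alpha>))" using G unfolding Good_def by simp
    finally show "mat_prod_list r (map (\<lambda>b. map_mat (\<lambda>q. poly q (x b)) (M b)) [0..<2^d]) \<in> mat_span r (range (Tv n r \<omega> p M d 0 \<alpha>))" .
  qed
  also have "\<dots> \<subseteq> mat_span r ?R" by (rule mspan_mono[OF RT])
  finally have "?L \<subseteq> mat_span r ?R" .
  thus "mat_span r ?L \<subseteq> mat_span r ?R" by (rule mspan_trans)
qed

end


theorem lemma3p10:
  fixes n r d :: nat
    and \<omega> :: "'a::field"
    and \<beta> :: "nat \<Rightarrow> 'a"
    and p :: "nat \<Rightarrow> 'a poly"
    and M :: "nat \<Rightarrow> 'a poly mat"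
  assumes "n \<ge> 1" and "r \<ge> 1"
    and "infinite (UNIV :: 'a set) \<or> card (UNIV :: 'a set) > (2 ^ d * n * r ^ 3) ^ 2"
    and "\<omega> \<noteq> 0"
    and "\<forall>k. 0 < k \<and> k < (2 ^ d * n * r ^ 2) ^ 2 \<longrightarrow> \<omega> ^ k \<noteq> 1"
    and "inj_on \<beta> {..<r^2}"
    and "\<forall>l<r^2. degree (p l) < r^2 \<and>
           (\<forall>i<r^2. poly (p l) (\<beta> i) = (if i = l then 1 else 0))"
    and "\<forall>b<2^d. M b \<in> carrier_mat r r \<and>
           (\<forall>i<r. \<forall>j<r. degree (M b $$ (i, j)) < n)"
  shows "mat_span r {mat_prod_list r
            (map (\<lambda>b. map_mat (\<lambda>q. poly q (x b)) (M b)) [0..<2^d]) | x. True}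
       = mat_span r {mat_prod_list r
            (map (\<lambda>b. map_mat (\<lambda>q. poly q (Gcal n r d \<omega> p b \<alpha>)) (M b)) [0..<2^d]) | \<alpha>. True}"
    by (rule main_result[OF assms(1-5) assms(7) assms(8)])

end
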